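(* The lamplighter group $G=\mathbb Z_2\wr\mathbb Z=(\bigoplus_{\mathbb Z}\mathbb Z_2)\rtimes\mathbb Z$ does not have the ISR property.
   Context: For a countable discrete group $G$, $L(G)$ is the group von Neumann algebra generated by the left regular unitaries $u_g$ on $\ell^2(G)$; for a subgroup $N$, $L(N)$ is the von Neumann subalgebra generated by $\{u_g:g\in N\}$. A von Neumann subalgebra $\mathcal M\subseteq L(G)$ is $G$-invariant if $u_g\mathcal M u_g^*\subseteq\mathcal M$ for all $g\in G$. $G$ has the ISR property if every $G$-invariant von Neumann subalgebra of $L(G)$ equals $L(N)$ for some normal subgroup $N\trianglelefteq G$. In $\mathbb Z_2\wr\mathbb Z$ the generator of $\mathbb Z$ acts on $\bigoplus_{\mathbb Z}\mathbb Z_2$ by shifting coordinates. *)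

theory Defs
  imports "HOL-Analysis.Infinite_Sum" "HOL-Algebra.Coset"
begin

definition l2 :: "('a, 'b) monoid_scheme \<Rightarrow> ('a \<Rightarrow> complex) set" where
  "l2 G = {x. (\<forall>g. g \<notin> carrier G \<longrightarrow> x g = 0) \<and>
              (\<lambda>g. (cmod (x g))\<^sup>2) summable_on carrier G}"

definition l2_inner :: "('a, 'b) monoid_scheme \<Rightarrow> ('a \<Rightarrow> complex) \<Rightarrow> ('a \<Rightarrow> complex) \<Rightarrow> complex" where
  "l2_inner G x y = (\<Sum>\<^sub>\<infinity>g\<in>carrier G. cnj (x g) * y g)"

definition l2_norm :: "('a, 'b) monoid_scheme \<Rightarrow> ('a \<Rightarrow> complex) \<Rightarrow> real" where
  "l2_norm G x = sqrt (\<Sum>\<^sub>\<infinity>g\<in>carrier G. (cmod (x g))\<^sup>2)"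

text \<open>Bounded linear operators on l2(G). An operator is represented by a total map
  which is required to send every non-l2 function to 0, so that operators are
  identified with their action on l2(G).\<close>

definition bops :: "('a, 'b) monoid_scheme \<Rightarrow> (('a \<Rightarrow> complex) \<Rightarrow> ('a \<Rightarrow> complex)) set" where
  "bops G = {T. (\<forall>x\<in>l2 G. T x \<in> l2 G)
              \<and> (\<forall>x\<in>l2 G. \<forall>y\<in>l2 G. \<forall>a b. T (\<lambda>g. a * x g + b * y g) = (\<lambda>g. a * T x g + b * T y g))
              \<and> (\<exists>C. \<forall>x\<in>l2 G. l2_norm G (T x) \<le> C * l2_norm G x)
              \<and> (\<forall>x. x \<notin> l2 G \<longrightarrow> T x = (\<lambda>_. 0))}"

definition commutant :: "('a, 'b) monoid_scheme \<Rightarrow> (('a \<Rightarrow> complex) \<Rightarrow> ('a \<Rightarrow> complex)) set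
    \<Rightarrow> (('a \<Rightarrow> complex) \<Rightarrow> ('a \<Rightarrow> complex)) set" where
  "commutant G S = {T \<in> bops G. \<forall>A\<in>S. T \<circ> A = A \<circ> T}"

definition star_closed :: "('a, 'b) monoid_scheme \<Rightarrow> (('a \<Rightarrow> complex) \<Rightarrow> ('a \<Rightarrow> complex)) set \<Rightarrow> bool" where
  "star_closed G M \<longleftrightarrow> (\<forall>T\<in>M. \<exists>S\<in>M. \<forall>x\<in>l2 G. \<forall>y\<in>l2 G. l2_inner G (T x) y = l2_inner G x (S y))"

text \<open>von Neumann algebra on l2(G): a self-adjoint set of bounded operators equal to
  its double commutant (equivalently, by the bicommutant theorem, a weakly closed
  unital *-subalgebra).\<close>

definition von_neumann_algebra :: "('a, 'b) monoid_scheme \<Rightarrow> (('a \<Rightarrow> complex) \<Rightarrow> ('a \<Rightarrow> complex)) set \<Rightarrow> bool" where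
  "von_neumann_algebra G M \<longleftrightarrow> M \<subseteq> bops G \<and> star_closed G M \<and> commutant G (commutant G M) = M"

definition lreg :: "('a, 'b) monoid_scheme \<Rightarrow> 'a \<Rightarrow> ('a \<Rightarrow> complex) \<Rightarrow> ('a \<Rightarrow> complex)" where
  "lreg G g = (\<lambda>x. if x \<in> l2 G then (\<lambda>h. if h \<in> carrier G then x (inv\<^bsub>G\<^esub> g \<otimes>\<^bsub>G\<^esub> h) else 0)
                    else (\<lambda>_. 0))"

definition group_vN :: "('a, 'b) monoid_scheme \<Rightarrow> 'a set \<Rightarrow> (('a \<Rightarrow> complex) \<Rightarrow> ('a \<Rightarrow> complex)) set" where
  "group_vN G N = commutant G (commutant G (lreg G ` N))"

definition G_invariant :: "('a, 'b) monoid_scheme \<Rightarrow> (('a \<Rightarrow> complex) \<Rightarrow> ('a \<Rightarrow> complex)) set \<Rightarrow> bool" where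
  "G_invariant G M \<longleftrightarrow> (\<forall>g\<in>carrier G. \<forall>T\<in>M. lreg G g \<circ> T \<circ> lreg G (inv\<^bsub>G\<^esub> g) \<in> M)"

definition has_ISR :: "('a, 'b) monoid_scheme \<Rightarrow> bool" where
  "has_ISR G \<longleftrightarrow> (\<forall>M. von_neumann_algebra G M \<and> M \<subseteq> group_vN G (carrier G) \<and> G_invariant G M
      \<longrightarrow> (\<exists>N. N \<lhd> G \<and> M = group_vN G N))"

text \<open>Elements (f, n): f a finitely supported configuration Z -> Z_2 (as bool, xor = addition),
  n in Z. Product (f,n)(g,m) = (f + shift_n g, n + m) with (shift_n g)(k) = g(k - n).\<close>

definition lamplighter :: "((int \<Rightarrow> bool) \<times> int) monoid" where
  "lamplighter = \<lparr> carrier = {(f, n). finite {k. f k}},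
                   mult = (\<lambda>(f, n) (g, m). (\<lambda>k. f k \<noteq> g (k - n), n + m)),
                   one = (\<lambda>_. False, 0) \<rparr>"

end

theory Submission
  imports Defs
begin


lemma LL_carrier: "carrier lamplighter = {(f, n). finite {k. f k}}"
  by (simp add: lamplighter_def)
lemma LL_mult: "(f, n) \<otimes>\<^bsub>lamplighter\<^esub> (g, m) = (\<lambda>k. f k \<noteq> g (k - n), n + m)"
  by (simp add: lamplighter_def)
lemma LL_one: "\<one>\<^bsub>lamplighter\<^esub> = (\<lambda>_. False, 0)"
  by (simp add: lamplighter_def)

lemma fin_xor:
  fixes f g :: "int \<Rightarrow> bool"
  assumes "finite {k. f k}" "finite {k. g k}"
  shows "finite {k. f k \<noteq> g (k - n)}"
proof -
  have "{k. f k \<noteq> g (k - n)} \<subseteq> {k. f k} \<union> (\<lambda>j. j + n) ` {j. g j}"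
    by (auto simp: image_iff) (metis diff_add_cancel)
  moreover have "finite ((\<lambda>j. j + n) ` {j. g j})" using assms(2) by simp
  ultimately show ?thesis using assms(1) finite_subset by blast
qed

lemma fin_shift:
  fixes f :: "int \<Rightarrow> bool"
  assumes "finite {k. f k}"
  shows "finite {k. f (k + n)}"
proof -
  have "{k. f (k + n)} = (\<lambda>j. j - n) ` {j. f j}" by (auto simp: image_iff) (metis add_diff_cancel)
  thus ?thesis using assms by simp
qed

lemma LL_group: "group lamplighter"
proof (rule groupI)
  fix x y assume "x \<in> carrier lamplighter" "y \<in> carrier lamplighter"
  then show "x \<otimes>\<^bsub>lamplighter\<^esub> y \<in> carrier lamplighter"
    by (cases x, cases y) (auto simp: LL_carrier LL_mult intro!: fin_xor[simplified])
next
  show "\<one>\<^bsub>lamplighter\<^esub> \<in> carrier lamplighter" by (simp add: LL_carrier LL_one)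
next
  fix x y z assume "x \<in> carrier lamplighter" "y \<in> carrier lamplighter" "z \<in> carrier lamplighter"
  then show "x \<otimes>\<^bsub>lamplighter\<^esub> y \<otimes>\<^bsub>lamplighter\<^esub> z = x \<otimes>\<^bsub>lamplighter\<^esub> (y \<otimes>\<^bsub>lamplighter\<^esub> z)"
    by (cases x, cases y, cases z) (auto simp: LL_mult algebra_simps)
next
  fix x assume "x \<in> carrier lamplighter"
  then show "\<one>\<^bsub>lamplighter\<^esub> \<otimes>\<^bsub>lamplighter\<^esub> x = x"
    by (cases x) (auto simp: LL_mult LL_one)
next
  fix x assume x: "x \<in> carrier lamplighter"
  obtain f n where xe: "x = (f, n)" by (cases x)
  have "(\<lambda>k. f (k + n), - n) \<in> carrier lamplighter"
    using x xe by (auto simp: LL_carrier intro: fin_shift)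
  moreover have "(\<lambda>k. f (k + n), - n) \<otimes>\<^bsub>lamplighter\<^esub> x = \<one>\<^bsub>lamplighter\<^esub>"
    by (simp add: xe LL_mult LL_one)
  ultimately show "\<exists>y\<in>carrier lamplighter. y \<otimes>\<^bsub>lamplighter\<^esub> x = \<one>\<^bsub>lamplighter\<^esub>" by blast
qed

lemma LL_inv:
  assumes "(f, n) \<in> carrier lamplighter"
  shows "inv\<^bsub>lamplighter\<^esub> (f, n) = (\<lambda>k. f (k + n), - n)"
proof (rule group.inv_equality[OF LL_group])
  show "(\<lambda>k. f (k + n), - n) \<otimes>\<^bsub>lamplighter\<^esub> (f, n) = \<one>\<^bsub>lamplighter\<^esub>"
    by (simp add: LL_mult LL_one)
  show "(\<lambda>k. f (k + n), - n) \<in> carrier lamplighter"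
    using assms by (auto simp: LL_carrier intro: fin_shift)
qed (use assms in auto)

lemma LL_inv_mult:
  assumes "(f, n) \<in> carrier lamplighter"
  shows "inv\<^bsub>lamplighter\<^esub> (f, n) \<otimes>\<^bsub>lamplighter\<^esub> (g, m) = (\<lambda>k. f (k + n) \<noteq> g (k + n), m - n)"
  using assms by (simp add: LL_inv LL_mult)


definition nrm2 :: "('a, 'b) monoid_scheme \<Rightarrow> ('a \<Rightarrow> complex) \<Rightarrow> real" where
  "nrm2 G x = (\<Sum>\<^sub>\<infinity>g\<in>carrier G. (cmod (x g))\<^sup>2)"

definition dlt :: "'a \<Rightarrow> 'a \<Rightarrow> complex" where
  "dlt g = (\<lambda>h. if h = g then 1 else 0)"

lemma l2_zero_off: "x \<in> l2 G \<Longrightarrow> g \<notin> carrier G \<Longrightarrow> x g = 0"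
  by (simp add: l2_def)

lemma l2_summable: "x \<in> l2 G \<Longrightarrow> (\<lambda>g. (cmod (x g))\<^sup>2) summable_on carrier G"
  by (simp add: l2_def)

lemma nrm2_nonneg: "0 \<le> nrm2 G x"
  unfolding nrm2_def by (rule infsum_nonneg) auto

lemma l2_norm_nrm2: "l2_norm G x = sqrt (nrm2 G x)"
  by (simp add: l2_norm_def nrm2_def)

lemma l2_dom:
  assumes "\<And>g. g \<notin> carrier G \<Longrightarrow> y g = 0" "h summable_on carrier G"
    "\<And>g. g \<in> carrier G \<Longrightarrow> (cmod (y g))\<^sup>2 \<le> h g"
  shows "y \<in> l2 G" "nrm2 G y \<le> infsum h (carrier G)"
proof -
  have s: "(\<lambda>g. (cmod (y g))\<^sup>2) summable_on carrier G"
    by (rule summable_on_comparison_test[OF assms(2)]) (use assms(3) in auto)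
  then show "y \<in> l2 G" using assms(1) by (simp add: l2_def)
  show "nrm2 G y \<le> infsum h (carrier G)"
    unfolding nrm2_def by (rule infsum_mono[OF s assms(2)]) (use assms(3) in auto)
qed

lemma l2_zero: "(\<lambda>_. 0) \<in> l2 G"
  by (simp add: l2_def)

lemma sq_lin_bound:
  fixes a b u v :: complex
  shows "(cmod (a * u + b * v))\<^sup>2 \<le> 2 * (cmod a)\<^sup>2 * (cmod u)\<^sup>2 + 2 * (cmod b)\<^sup>2 * (cmod v)\<^sup>2"
proof -
  define p where "p = cmod a * cmod u"
  define q where "q = cmod b * cmod v"
  have "cmod (a * u + b * v) \<le> p + q"
    using norm_triangle_ineq[of "a * u" "b * v"] by (simp add: norm_mult p_def q_def)
  then have "(cmod (a * u + b * v))\<^sup>2 \<le> (p + q)\<^sup>2"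
    by (rule power_mono) simp
  also have "\<dots> \<le> 2 * p\<^sup>2 + 2 * q\<^sup>2"
  proof -
    have "0 \<le> (p - q)\<^sup>2" by simp
    then show ?thesis by (simp add: power2_eq_square algebra_simps)
  qed
  finally show ?thesis by (simp add: p_def q_def power_mult_distrib)
qed

lemma l2_lin:
  assumes "x \<in> l2 G" "y \<in> l2 G"
  shows "(\<lambda>g. a * x g + b * y g) \<in> l2 G"
    "nrm2 G (\<lambda>g. a * x g + b * y g) \<le> 2 * (cmod a)\<^sup>2 * nrm2 G x + 2 * (cmod b)\<^sup>2 * nrm2 G y"
proof -
  let ?h = "\<lambda>g. 2 * (cmod a)\<^sup>2 * (cmod (x g))\<^sup>2 + 2 * (cmod b)\<^sup>2 * (cmod (y g))\<^sup>2"
  have sx: "(\<lambda>g. 2 * (cmod a)\<^sup>2 * (cmod (x g))\<^sup>2) summable_on carrier G"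
    by (rule summable_on_cmult_right) (rule l2_summable[OF assms(1)])
  have sy: "(\<lambda>g. 2 * (cmod b)\<^sup>2 * (cmod (y g))\<^sup>2) summable_on carrier G"
    by (rule summable_on_cmult_right) (rule l2_summable[OF assms(2)])
  have sh: "?h summable_on carrier G" by (rule summable_on_add[OF sx sy])
  have ih: "infsum ?h (carrier G) = 2 * (cmod a)\<^sup>2 * nrm2 G x + 2 * (cmod b)\<^sup>2 * nrm2 G y"
    by (simp add: infsum_add[OF sx sy] infsum_cmult_right l2_summable assms nrm2_def)
  have z: "\<And>g. g \<notin> carrier G \<Longrightarrow> a * x g + b * y g = 0"
    using assms by (simp add: l2_zero_off)
  show "(\<lambda>g. a * x g + b * y g) \<in> l2 G"
    by (rule l2_dom(1)[OF z sh sq_lin_bound])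
  show "nrm2 G (\<lambda>g. a * x g + b * y g) \<le> 2 * (cmod a)\<^sup>2 * nrm2 G x + 2 * (cmod b)\<^sup>2 * nrm2 G y"
    using l2_dom(2)[OF z sh sq_lin_bound] ih by simp
qed

lemma nrm_has_sum:
  assumes "x \<in> l2 G" "y \<in> l2 G"
  shows "((\<lambda>g. c1 * (cmod (x g))\<^sup>2 + c2 * (cmod (y g))\<^sup>2) has_sum (c1 * nrm2 G x + c2 * nrm2 G y)) (carrier G)"
proof -
  have hx: "((\<lambda>g. (cmod (x g))\<^sup>2) has_sum nrm2 G x) (carrier G)"
    unfolding nrm2_def using l2_summable[OF assms(1)] by simp
  have hy: "((\<lambda>g. (cmod (y g))\<^sup>2) has_sum nrm2 G y) (carrier G)"
    unfolding nrm2_def using l2_summable[OF assms(2)] by simp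
  show ?thesis by (rule has_sum_add[OF has_sum_cmult_right[OF hx] has_sum_cmult_right[OF hy]])
qed

lemma inner_pt_bound:
  fixes u v :: complex and t :: real
  assumes "t > 0"
  shows "cmod (cnj u * v) \<le> (t / 2) * (cmod u)\<^sup>2 + (1 / (2 * t)) * (cmod v)\<^sup>2"
proof -
  have "0 \<le> (t * cmod u - cmod v)\<^sup>2 / t" using assms by simp
  then have "0 \<le> (t * t * (cmod u)\<^sup>2 - 2 * t * cmod u * cmod v + (cmod v)\<^sup>2) / t"
    by (simp add: power2_eq_square algebra_simps)
  then have "0 \<le> t * (cmod u)\<^sup>2 - 2 * cmod u * cmod v + (cmod v)\<^sup>2 / t"
    using assms by (simp add: add_divide_distrib diff_divide_distrib power2_eq_square)
  then show ?thesis by (simp add: norm_mult field_simps)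
qed

lemma inner_abs_summable:
  assumes "x \<in> l2 G" "y \<in> l2 G"
  shows "(\<lambda>g. norm (cnj (x g) * y g)) summable_on carrier G"
proof (rule abs_summable_on_comparison_test')
  show "(\<lambda>g. (1 / 2) * (cmod (x g))\<^sup>2 + (1 / (2 * 1)) * (cmod (y g))\<^sup>2) summable_on carrier G"
    using nrm_has_sum[OF assms] by (rule has_sum_imp_summable)
  show "\<And>g. g \<in> carrier G \<Longrightarrow> norm (cnj (x g) * y g) \<le> (1 / 2) * (cmod (x g))\<^sup>2 + (1 / (2 * 1)) * (cmod (y g))\<^sup>2"
    using inner_pt_bound[of 1] by simp
qed

lemma inner_summable:
  assumes "x \<in> l2 G" "y \<in> l2 G"
  shows "(\<lambda>g. cnj (x g) * y g) summable_on carrier G"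
  by (rule abs_summable_summable) (rule inner_abs_summable[OF assms])

lemma inner_has_sum:
  assumes "x \<in> l2 G" "y \<in> l2 G"
  shows "((\<lambda>g. cnj (x g) * y g) has_sum l2_inner G x y) (carrier G)"
  unfolding l2_inner_def using inner_summable[OF assms] by simp

lemma inner_bound_t:
  assumes "x \<in> l2 G" "y \<in> l2 G" "t > 0"
  shows "cmod (l2_inner G x y) \<le> (t / 2) * nrm2 G x + (1 / (2 * t)) * nrm2 G y"
proof -
  have "cmod (l2_inner G x y) \<le> (\<Sum>\<^sub>\<infinity>g\<in>carrier G. norm (cnj (x g) * y g))"
    unfolding l2_inner_def
    by (rule norm_infsum_bound) (rule inner_abs_summable[OF assms(1,2)])
  also have "\<dots> \<le> (t / 2) * nrm2 G x + (1 / (2 * t)) * nrm2 G y"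
    by (rule has_sum_mono[OF has_sum_infsum[OF inner_abs_summable[OF assms(1,2)]] nrm_has_sum[OF assms(1,2)]])
       (rule inner_pt_bound[OF assms(3)])
  finally show ?thesis .
qed


lemma nrm2_zero_imp:
  assumes "x \<in> l2 G" "nrm2 G x = 0" "g \<in> carrier G"
  shows "x g = 0"
  using nonneg_infsum_le_0D[of "\<lambda>g. (cmod (x g))\<^sup>2" "carrier G" g] assms l2_summable
  unfolding nrm2_def by auto

lemma arith_sq:
  fixes a b :: real
  assumes "a > 0" "b > 0"
  shows "(b / a / 2) * (a * a) + 1 / (2 * (b / a)) * (b * b) = a * b"
  using assms by (simp add: field_simps)

lemma inner_CS:
  assumes "x \<in> l2 G" "y \<in> l2 G"
  shows "cmod (l2_inner G x y) \<le> l2_norm G x * l2_norm G y"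
proof (cases "nrm2 G x = 0 \<or> nrm2 G y = 0")
  case True
  then have "\<And>g. g \<in> carrier G \<Longrightarrow> cnj (x g) * y g = 0"
    using nrm2_zero_imp assms by fastforce
  then have "l2_inner G x y = 0"
    unfolding l2_inner_def by (simp add: infsum_0)
  then show ?thesis by (simp add: l2_norm_nrm2 nrm2_nonneg)
next
  case False
  define A where "A = nrm2 G x"
  define B where "B = nrm2 G y"
  have A: "A > 0" using False nrm2_nonneg[of G x] unfolding A_def by linarith
  have B: "B > 0" using False nrm2_nonneg[of G y] unfolding B_def by linarith
  define t where "t = sqrt B / sqrt A"
  have t: "t > 0" using A B by (simp add: t_def)
  have "cmod (l2_inner G x y) \<le> (t / 2) * A + (1 / (2 * t)) * B"
    using inner_bound_t[OF assms t] by (simp add: A_def B_def)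
  also have "\<dots> = sqrt A * sqrt B"
  proof -
    have a: "A = sqrt A * sqrt A" using A by simp
    have b: "B = sqrt B * sqrt B" using B by simp
    have sa: "sqrt A > 0" "sqrt B > 0" using A B by auto
    have "(sqrt B / sqrt A / 2) * (sqrt A * sqrt A) + 1 / (2 * (sqrt B / sqrt A)) * (sqrt B * sqrt B) = sqrt A * sqrt B"
      by (rule arith_sq[OF sa])
    then show ?thesis unfolding t_def using a b by metis
  qed
  finally show ?thesis by (simp add: l2_norm_nrm2 A_def B_def)
qed

lemma dlt_l2: "g \<in> carrier G \<Longrightarrow> dlt g \<in> l2 G"
proof -
  assume g: "g \<in> carrier G"
  have "finite {h \<in> carrier G. (cmod (dlt g h))\<^sup>2 \<noteq> 0}"
    by (rule finite_subset[of _ "{g}"]) (auto simp: dlt_def split: if_splits)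
  then show ?thesis using g unfolding l2_def
    by (auto intro!: finite_nonzero_values_imp_summable_on simp: dlt_def)
qed

lemma inner_dlt: "g \<in> carrier G \<Longrightarrow> l2_inner G (dlt g) z = z g"
proof -
  assume g: "g \<in> carrier G"
  have "(\<Sum>\<^sub>\<infinity>h\<in>carrier G. cnj (dlt g h) * z h) = (\<Sum>\<^sub>\<infinity>h\<in>{g}. cnj (dlt g h) * z h)"
    by (rule infsum_cong_neutral) (use g in \<open>auto simp: dlt_def\<close>)
  then show ?thesis by (simp add: l2_inner_def dlt_def)
qed

lemma nrm2_dlt: "g \<in> carrier G \<Longrightarrow> nrm2 G (dlt g) = 1"
proof -
  assume g: "g \<in> carrier G"
  have "(\<Sum>\<^sub>\<infinity>h\<in>carrier G. (cmod (dlt g h))\<^sup>2) = (\<Sum>\<^sub>\<infinity>h\<in>{g}. (cmod (dlt g h))\<^sup>2)"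
    by (rule infsum_cong_neutral) (use g in \<open>auto simp: dlt_def\<close>)
  then show ?thesis by (simp add: nrm2_def dlt_def)
qed

lemma inner_lin_right:
  assumes "x \<in> l2 G" "y \<in> l2 G" "z \<in> l2 G"
  shows "l2_inner G x (\<lambda>g. a * y g + b * z g) = a * l2_inner G x y + b * l2_inner G x z"
proof -
  have "((\<lambda>g. a * (cnj (x g) * y g) + b * (cnj (x g) * z g)) has_sum (a * l2_inner G x y + b * l2_inner G x z)) (carrier G)"
    by (rule has_sum_add[OF has_sum_cmult_right[OF inner_has_sum[OF assms(1,2)]]
          has_sum_cmult_right[OF inner_has_sum[OF assms(1,3)]]])
  then have "((\<lambda>g. cnj (x g) * (a * y g + b * z g)) has_sum (a * l2_inner G x y + b * l2_inner G x z)) (carrier G)"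
    by (simp add: algebra_simps)
  then show ?thesis unfolding l2_inner_def by (rule infsumI)
qed

lemma inner_cnj: "l2_inner G y x = cnj (l2_inner G x y)"
proof -
  have "cnj (l2_inner G x y) = (\<Sum>\<^sub>\<infinity>g\<in>carrier G. cnj (cnj (x g) * y g))"
    unfolding l2_inner_def by (simp only: infsum_cnj)
  then show ?thesis by (simp add: l2_inner_def mult.commute)
qed

lemma inner_lin_left:
  assumes "x \<in> l2 G" "y \<in> l2 G" "z \<in> l2 G"
  shows "l2_inner G (\<lambda>g. a * x g + b * y g) z = cnj a * l2_inner G x z + cnj b * l2_inner G y z"
proof -
  have "l2_inner G (\<lambda>g. a * x g + b * y g) z = cnj (l2_inner G z (\<lambda>g. a * x g + b * y g))"
    by (rule inner_cnj)
  also have "\<dots> = cnj (a * l2_inner G z x + b * l2_inner G z y)"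
    by (simp only: inner_lin_right[OF assms(3,1,2)])
  also have "\<dots> = cnj a * cnj (l2_inner G z x) + cnj b * cnj (l2_inner G z y)" by simp
  also have "\<dots> = cnj a * l2_inner G x z + cnj b * l2_inner G y z"
    by (simp add: inner_cnj[of G z x] inner_cnj[of G z y])
  finally show ?thesis .
qed

lemma l2_ext:
  assumes "u \<in> l2 G" "v \<in> l2 G" "\<And>x. x \<in> l2 G \<Longrightarrow> l2_inner G x u = l2_inner G x v"
  shows "u = v"
proof
  fix h show "u h = v h"
  proof (cases "h \<in> carrier G")
    case True
    then show ?thesis using assms(3)[OF dlt_l2[OF True]] by (simp add: inner_dlt)
  next
    case False
    then show ?thesis using assms(1,2) by (simp add: l2_zero_off)
  qed
qed

lemma has_sum_finsum:
  fixes f :: "'i \<Rightarrow> 'a \<Rightarrow> 'c::topological_comm_monoid_add"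
  assumes "finite F" "\<And>i. i \<in> F \<Longrightarrow> (f i has_sum s i) A"
  shows "((\<lambda>x. \<Sum>i\<in>F. f i x) has_sum (\<Sum>i\<in>F. s i)) A"
  using assms
proof (induction F rule: finite_induct)
  case empty
  then show ?case by simp
next
  case (insert j F)
  have "((\<lambda>x. f j x + (\<Sum>i\<in>F. f i x)) has_sum (s j + (\<Sum>i\<in>F. s i))) A"
    by (rule has_sum_add) (use insert in auto)
  then show ?case using insert by simp
qed

lemma bops_l2: "T \<in> bops G \<Longrightarrow> x \<in> l2 G \<Longrightarrow> T x \<in> l2 G"
  by (simp add: bops_def)

lemma bops_lin: "T \<in> bops G \<Longrightarrow> x \<in> l2 G \<Longrightarrow> y \<in> l2 G \<Longrightarrow>
    T (\<lambda>g. a * x g + b * y g) = (\<lambda>g. a * T x g + b * T y g)"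
  by (simp add: bops_def)

lemma bops_out: "T \<in> bops G \<Longrightarrow> x \<notin> l2 G \<Longrightarrow> T x = (\<lambda>_. 0)"
  by (simp add: bops_def)

lemma bops_zero: "T \<in> bops G \<Longrightarrow> T (\<lambda>_. 0) = (\<lambda>_. 0)"
  using bops_lin[of T G "\<lambda>_. 0" "\<lambda>_. 0" 0 0] l2_zero[of G] by simp

lemma bops_bound:
  assumes "T \<in> bops G"
  shows "\<exists>K>0. \<forall>x\<in>l2 G. nrm2 G (T x) \<le> K * nrm2 G x"
proof -
  obtain C where C: "\<forall>x\<in>l2 G. l2_norm G (T x) \<le> C * l2_norm G x"
    using assms by (auto simp: bops_def)
  define D where "D = max C 1"
  have "\<forall>x\<in>l2 G. nrm2 G (T x) \<le> D\<^sup>2 * nrm2 G x"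
  proof
    fix x assume x: "x \<in> l2 G"
    have "sqrt (nrm2 G (T x)) \<le> D * sqrt (nrm2 G x)"
    proof -
      have "sqrt (nrm2 G (T x)) \<le> C * sqrt (nrm2 G x)" using C x by (simp add: l2_norm_nrm2)
      also have "\<dots> \<le> D * sqrt (nrm2 G x)" unfolding D_def by (rule mult_right_mono) (auto simp: nrm2_nonneg)
      finally show ?thesis .
    qed
    then have "(sqrt (nrm2 G (T x)))\<^sup>2 \<le> (D * sqrt (nrm2 G x))\<^sup>2"
      by (rule power_mono) (simp add: nrm2_nonneg)
    then show "nrm2 G (T x) \<le> D\<^sup>2 * nrm2 G x"
      by (simp add: power_mult_distrib nrm2_nonneg)
  qed
  moreover have "D\<^sup>2 > 0" unfolding D_def by simp
  ultimately show ?thesis by blast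
qed

lemma bopsI:
  assumes "\<And>x. x \<in> l2 G \<Longrightarrow> T x \<in> l2 G"
    "\<And>x y a b. x \<in> l2 G \<Longrightarrow> y \<in> l2 G \<Longrightarrow> T (\<lambda>g. a * x g + b * y g) = (\<lambda>g. a * T x g + b * T y g)"
    "\<And>x. x \<in> l2 G \<Longrightarrow> nrm2 G (T x) \<le> K * nrm2 G x"
    "\<And>x. x \<notin> l2 G \<Longrightarrow> T x = (\<lambda>_. 0)"
  shows "T \<in> bops G"
proof -
  define K' where "K' = max K 0"
  have "\<forall>x\<in>l2 G. l2_norm G (T x) \<le> sqrt K' * l2_norm G x"
  proof
    fix x assume x: "x \<in> l2 G"
    have "nrm2 G (T x) \<le> K' * nrm2 G x"
      using assms(3)[OF x] nrm2_nonneg[of G x] unfolding K'_def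
      by (meson max.cobounded1 mult_right_mono order_trans)
    then have "sqrt (nrm2 G (T x)) \<le> sqrt (K' * nrm2 G x)" by simp
    then show "l2_norm G (T x) \<le> sqrt K' * l2_norm G x"
      by (simp add: l2_norm_nrm2 real_sqrt_mult)
  qed
  then show ?thesis using assms unfolding bops_def by blast
qed

lemma bops_finsum:
  assumes "T \<in> bops G" "finite F" "\<And>i. i \<in> F \<Longrightarrow> y i \<in> l2 G"
  shows "(\<lambda>g. \<Sum>i\<in>F. c i * y i g) \<in> l2 G \<and> T (\<lambda>g. \<Sum>i\<in>F. c i * y i g) = (\<lambda>g. \<Sum>i\<in>F. c i * T (y i) g)"
  using assms(2,3)
proof (induction F rule: finite_induct)
  case empty
  then show ?case using bops_zero[OF assms(1)] l2_zero by simp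
next
  case (insert j F)
  let ?S = "\<lambda>g. \<Sum>i\<in>F. c i * y i g"
  have IH: "?S \<in> l2 G" "T ?S = (\<lambda>g. \<Sum>i\<in>F. c i * T (y i) g)" using insert by auto
  have yj: "y j \<in> l2 G" using insert by auto
  have e: "(\<lambda>g. \<Sum>i\<in>insert j F. c i * y i g) = (\<lambda>g. c j * y j g + 1 * ?S g)"
    using insert.hyps by simp
  show ?case
  proof
    show "(\<lambda>g. \<Sum>i\<in>insert j F. c i * y i g) \<in> l2 G" unfolding e by (rule l2_lin(1)[OF yj IH(1)])
    have "T (\<lambda>g. c j * y j g + 1 * ?S g) = (\<lambda>g. c j * T (y j) g + 1 * T ?S g)"
      by (rule bops_lin[OF assms(1) yj IH(1)])
    also have "\<dots> = (\<lambda>g. \<Sum>i\<in>insert j F. c i * T (y i) g)"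
      unfolding IH(2) using insert.hyps by simp
    finally show "T (\<lambda>g. \<Sum>i\<in>insert j F. c i * y i g) = (\<lambda>g. \<Sum>i\<in>insert j F. c i * T (y i) g)"
      unfolding e .
  qed
qed

lemma bops_comp:
  assumes "A \<in> bops G" "B \<in> bops G"
  shows "A \<circ> B \<in> bops G"
proof -
  obtain KA where KA: "KA > 0" "\<forall>x\<in>l2 G. nrm2 G (A x) \<le> KA * nrm2 G x" using bops_bound[OF assms(1)] by blast
  obtain KB where KB: "KB > 0" "\<forall>x\<in>l2 G. nrm2 G (B x) \<le> KB * nrm2 G x" using bops_bound[OF assms(2)] by blast
  show ?thesis
  proof (rule bopsI[where K = "KA * KB"])
    fix x assume x: "x \<in> l2 G"
    show "(A \<circ> B) x \<in> l2 G" using bops_l2[OF assms(1) bops_l2[OF assms(2) x]] by simp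
    have "nrm2 G (A (B x)) \<le> KA * nrm2 G (B x)" using KA x assms(2) bops_l2 by blast
    also have "\<dots> \<le> KA * (KB * nrm2 G x)" using KB x KA(1) by (simp add: mult_left_mono)
    finally show "nrm2 G ((A \<circ> B) x) \<le> KA * KB * nrm2 G x" by (simp add: mult.assoc)
  next
    fix x y a b assume "x \<in> l2 G" "y \<in> l2 G"
    then show "(A \<circ> B) (\<lambda>g. a * x g + b * y g) = (\<lambda>g. a * (A \<circ> B) x g + b * (A \<circ> B) y g)"
    proof -
      have "A (B (\<lambda>g. a * x g + b * y g)) = A (\<lambda>g. a * B x g + b * B y g)"
        using bops_lin[OF assms(2) \<open>x \<in> l2 G\<close> \<open>y \<in> l2 G\<close>] by simp
      also have "\<dots> = (\<lambda>g. a * A (B x) g + b * A (B y) g)"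
        by (rule bops_lin[OF assms(1) bops_l2[OF assms(2) \<open>x \<in> l2 G\<close>] bops_l2[OF assms(2) \<open>y \<in> l2 G\<close>]])
      finally show ?thesis by simp
    qed
  next
    fix x assume "x \<notin> l2 G"
    then show "(A \<circ> B) x = (\<lambda>_. 0)" using bops_out[OF assms(2)] bops_zero[OF assms(1)] by simp
  qed
qed


definition adj :: "('a, 'b) monoid_scheme \<Rightarrow> (('a \<Rightarrow> complex) \<Rightarrow> ('a \<Rightarrow> complex)) \<Rightarrow> ('a \<Rightarrow> complex) \<Rightarrow> ('a \<Rightarrow> complex)" where
  "adj G T = (\<lambda>y. if y \<in> l2 G then (\<lambda>g. if g \<in> carrier G then l2_inner G (T (dlt g)) y else 0) else (\<lambda>_. 0))"

definition restr :: "'a set \<Rightarrow> ('a \<Rightarrow> complex) \<Rightarrow> 'a \<Rightarrow> complex" where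
  "restr F c = (\<lambda>h. if h \<in> F then c h else 0)"

lemma restr_as_sum: "finite F \<Longrightarrow> restr F c = (\<lambda>h. \<Sum>g\<in>F. c g * dlt g h)"
proof
  fix h assume "finite F"
  have "(\<Sum>g\<in>F. c g * dlt g h) = (\<Sum>g\<in>F. if h = g then c g else 0)"
    by (rule sum.cong) (auto simp: dlt_def)
  also have "\<dots> = restr F c h" using \<open>finite F\<close> by (simp add: restr_def)
  finally show "restr F c h = (\<Sum>g\<in>F. c g * dlt g h)" by simp
qed

lemma restr_l2:
  assumes "finite F" "F \<subseteq> carrier G"
  shows "restr F c \<in> l2 G"
proof -
  have "finite {h \<in> carrier G. (cmod (restr F c h))\<^sup>2 \<noteq> 0}"
    by (rule finite_subset[OF _ assms(1)]) (auto simp: restr_def split: if_splits)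
  then show ?thesis using assms unfolding l2_def
    by (auto intro!: finite_nonzero_values_imp_summable_on simp: restr_def)
qed

lemma T_restr:
  assumes "T \<in> bops G" "finite F" "F \<subseteq> carrier G"
  shows "T (restr F c) = (\<lambda>h. \<Sum>g\<in>F. c g * T (dlt g) h)"
proof -
  have pre: "\<And>i. i \<in> F \<Longrightarrow> dlt i \<in> l2 G" using assms(3) by (intro dlt_l2) auto
  have "T (\<lambda>g. \<Sum>i\<in>F. c i * dlt i g) = (\<lambda>g. \<Sum>i\<in>F. c i * T (dlt i) g)"
    by (rule conjunct2[OF bops_finsum[OF assms(1,2) pre, where c = c]])
  then show ?thesis unfolding restr_as_sum[OF assms(2)] .
qed

lemma inner_T_restr:
  assumes "T \<in> bops G" "finite F" "F \<subseteq> carrier G" "y \<in> l2 G"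
  shows "l2_inner G (T (restr F c)) y = (\<Sum>g\<in>F. cnj (c g) * l2_inner G (T (dlt g)) y)"
proof -
  have eq: "(\<lambda>h. cnj (T (restr F c) h) * y h) = (\<lambda>h. \<Sum>g\<in>F. cnj (c g) * (cnj (T (dlt g) h) * y h))"
  proof
    fix h
    show "cnj (T (restr F c) h) * y h = (\<Sum>g\<in>F. cnj (c g) * (cnj (T (dlt g) h) * y h))"
      unfolding T_restr[OF assms(1-3)] by (simp add: cnj_sum sum_distrib_right mult.assoc)
  qed
  have "((\<lambda>h. cnj (T (restr F c) h) * y h) has_sum (\<Sum>g\<in>F. cnj (c g) * l2_inner G (T (dlt g)) y)) (carrier G)"
    unfolding eq
  proof (rule has_sum_finsum[OF assms(2)])
    fix g assume "g \<in> F"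
    then have "T (dlt g) \<in> l2 G" using assms(3) by (intro bops_l2[OF assms(1)] dlt_l2) auto
    then show "((\<lambda>h. cnj (c g) * (cnj (T (dlt g) h) * y h)) has_sum cnj (c g) * l2_inner G (T (dlt g)) y) (carrier G)"
      by (rule has_sum_cmult_right[OF inner_has_sum[OF _ assms(4)]])
  qed
  then show ?thesis unfolding l2_inner_def by (rule infsumI)
qed

lemma nrm2_restr:
  assumes "finite F" "F \<subseteq> carrier G"
  shows "nrm2 G (restr F c) = (\<Sum>g\<in>F. (cmod (c g))\<^sup>2)"
proof -
  have "nrm2 G (restr F c) = (\<Sum>\<^sub>\<infinity>h\<in>F. (cmod (restr F c h))\<^sup>2)"
    unfolding nrm2_def by (rule infsum_cong_neutral) (use assms in \<open>auto simp: restr_def\<close>)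
  also have "\<dots> = (\<Sum>g\<in>F. (cmod (c g))\<^sup>2)" using assms(1) by (simp add: restr_def)
  finally show ?thesis .
qed

lemma adj_claim1:
  assumes T: "T \<in> bops G" and K: "K > 0" "\<forall>x\<in>l2 G. nrm2 G (T x) \<le> K * nrm2 G x"
    and y: "y \<in> l2 G" and F: "finite F" "F \<subseteq> carrier G"
  shows "(\<Sum>g\<in>F. (cmod (l2_inner G (T (dlt g)) y))\<^sup>2) \<le> K * nrm2 G y"
proof -
  define a where "a g = l2_inner G (T (dlt g)) y" for g
  define s where "s = (\<Sum>g\<in>F. (cmod (a g))\<^sup>2)"
  define x where "x = restr F a"
  have xl: "x \<in> l2 G" unfolding x_def by (rule restr_l2[OF F])
  have nx: "nrm2 G x = s" unfolding x_def s_def by (rule nrm2_restr[OF F])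
  have "l2_inner G (T x) y = (\<Sum>g\<in>F. cnj (a g) * a g)"
    unfolding x_def using inner_T_restr[OF T F y] by (simp add: a_def)
  also have "\<dots> = of_real s"
    unfolding s_def of_real_sum by (rule sum.cong[OF refl], subst complex_norm_square, simp add: mult.commute)
  finally have ip: "l2_inner G (T x) y = of_real s" .
  have s0: "s \<ge> 0" unfolding s_def by (simp add: sum_nonneg)
  have nTx: "nrm2 G (T x) \<le> K * s" using K(2) xl nx by auto
  have "s = cmod (l2_inner G (T x) y)" using ip s0 by simp
  also have "\<dots> \<le> l2_norm G (T x) * l2_norm G y" by (rule inner_CS[OF bops_l2[OF T xl] y])
  also have "\<dots> \<le> sqrt (K * s) * l2_norm G y"
  proof (rule mult_right_mono)
    show "l2_norm G (T x) \<le> sqrt (K * s)" unfolding l2_norm_nrm2 using nTx by (rule real_sqrt_le_mono)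
    show "0 \<le> l2_norm G y" unfolding l2_norm_nrm2 by (rule real_sqrt_ge_zero[OF nrm2_nonneg])
  qed
  finally have "s \<le> sqrt (K * s) * sqrt (nrm2 G y)" unfolding l2_norm_nrm2 .
  then have "s\<^sup>2 \<le> (sqrt (K * s) * sqrt (nrm2 G y))\<^sup>2"
    using s0 by (rule power_mono)
  moreover have "(sqrt (K * s) * sqrt (nrm2 G y))\<^sup>2 = K * s * nrm2 G y"
  proof -
    have a: "(sqrt (K * s))\<^sup>2 = K * s" using s0 K(1) by (intro real_sqrt_pow2) simp
    have b: "(sqrt (nrm2 G y))\<^sup>2 = nrm2 G y" by (rule real_sqrt_pow2[OF nrm2_nonneg])
    show ?thesis by (simp only: power_mult_distrib a b)
  qed
  ultimately have ss: "s * s \<le> (K * nrm2 G y) * s"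
    by (simp add: power2_eq_square mult_ac)
  have "s \<le> K * nrm2 G y"
  proof (cases "s = 0")
    case True
    then show ?thesis using K(1) nrm2_nonneg[of G y] by simp
  next
    case False
    then have "s > 0" using s0 by simp
    then show ?thesis using ss mult_le_cancel_right_pos[of s s "K * nrm2 G y"] by simp
  qed
  then show ?thesis by (simp add: s_def a_def)
qed

lemma adj_l2:
  assumes T: "T \<in> bops G" and K: "K > 0" "\<forall>x\<in>l2 G. nrm2 G (T x) \<le> K * nrm2 G x"
    and y: "y \<in> l2 G"
  shows "adj G T y \<in> l2 G" "nrm2 G (adj G T y) \<le> K * nrm2 G y"
proof -
  have e: "\<And>F. F \<subseteq> carrier G \<Longrightarrow> (\<Sum>g\<in>F. (cmod (adj G T y g))\<^sup>2) = (\<Sum>g\<in>F. (cmod (l2_inner G (T (dlt g)) y))\<^sup>2)"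
    by (rule sum.cong) (auto simp: adj_def y)
  have b: "\<And>F. finite F \<Longrightarrow> F \<subseteq> carrier G \<Longrightarrow> (\<Sum>g\<in>F. (cmod (adj G T y g))\<^sup>2) \<le> K * nrm2 G y"
    using e adj_claim1[OF T K y] by simp
  have sm: "(\<lambda>g. (cmod (adj G T y g))\<^sup>2) summable_on carrier G"
    by (rule nonneg_bdd_above_summable_on) (auto intro!: bdd_aboveI2[where M = "K * nrm2 G y"] b)
  show "adj G T y \<in> l2 G" using sm by (simp add: l2_def adj_def y)
  show "nrm2 G (adj G T y) \<le> K * nrm2 G y"
    unfolding nrm2_def[of G "adj G T y"] by (rule infsum_le_finite_sums[OF sm b])
qed

lemma adj_rel:
  assumes T: "T \<in> bops G" and x: "x \<in> l2 G" and y: "y \<in> l2 G"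
  shows "l2_inner G (T x) y = l2_inner G x (adj G T y)"
proof -
  obtain K where K: "K > 0" "\<forall>x\<in>l2 G. nrm2 G (T x) \<le> K * nrm2 G x" using bops_bound[OF T] by blast
  define b where "b = adj G T y"
  have bl: "b \<in> l2 G" unfolding b_def by (rule adj_l2(1)[OF T K y])
  let ?F = "finite_subsets_at_top (carrier G)"
  have lim1: "((\<lambda>F. \<Sum>g\<in>F. cnj (x g) * b g) \<longlongrightarrow> l2_inner G x b) ?F"
    using inner_has_sum[OF x bl] by (simp add: has_sum_def)
  have eq: "\<forall>\<^sub>F F in ?F. (\<Sum>g\<in>F. cnj (x g) * b g) = l2_inner G (T (restr F x)) y"
  proof (rule eventually_finite_subsets_at_top_weakI)
    fix F assume F: "finite F" "F \<subseteq> carrier G"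
    have "(\<Sum>g\<in>F. cnj (x g) * b g) = (\<Sum>g\<in>F. cnj (x g) * l2_inner G (T (dlt g)) y)"
      by (rule sum.cong) (use F in \<open>auto simp: b_def adj_def y\<close>)
    then show "(\<Sum>g\<in>F. cnj (x g) * b g) = l2_inner G (T (restr F x)) y"
      using inner_T_restr[OF T F y] by simp
  qed
  define d where "d F = (\<lambda>h. 1 * x h + (-1) * restr F x h)" for F
  have bnd: "\<forall>\<^sub>F F in ?F. norm (l2_inner G (T x) y - l2_inner G (T (restr F x)) y)
      \<le> norm (sqrt (K * (nrm2 G x - (\<Sum>g\<in>F. (cmod (x g))\<^sup>2)))) * sqrt (nrm2 G y)"
  proof (rule eventually_finite_subsets_at_top_weakI)
    fix F assume F: "finite F" "F \<subseteq> carrier G"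
    have rl: "restr F x \<in> l2 G" by (rule restr_l2[OF F])
    have dl: "d F \<in> l2 G" unfolding d_def by (rule l2_lin(1)[OF x rl])
    have Td: "T (d F) = (\<lambda>h. 1 * T x h + (-1) * T (restr F x) h)"
      unfolding d_def by (rule bops_lin[OF T x rl])
    have "l2_inner G (T (d F)) y = l2_inner G (T x) y - l2_inner G (T (restr F x)) y"
      unfolding Td using inner_lin_left[OF bops_l2[OF T x] bops_l2[OF T rl] y, of 1 "-1"] by simp
    then have "norm (l2_inner G (T x) y - l2_inner G (T (restr F x)) y) = cmod (l2_inner G (T (d F)) y)"
      by simp
    also have "\<dots> \<le> l2_norm G (T (d F)) * l2_norm G y" by (rule inner_CS[OF bops_l2[OF T dl] y])
    also have "\<dots> \<le> sqrt (K * nrm2 G (d F)) * sqrt (nrm2 G y)"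
      unfolding l2_norm_nrm2 using K(2) dl by (intro mult_right_mono) (auto simp: nrm2_nonneg)
    also have "nrm2 G (d F) = nrm2 G x - (\<Sum>g\<in>F. (cmod (x g))\<^sup>2)"
    proof -
      have h1: "((\<lambda>h. (cmod (x h))\<^sup>2) has_sum nrm2 G x) (carrier G)"
        unfolding nrm2_def using l2_summable[OF x] by simp
      have h2: "((\<lambda>h. (cmod (restr F x h))\<^sup>2) has_sum (\<Sum>g\<in>F. (cmod (x g))\<^sup>2)) (carrier G)"
      proof -
        have "((\<lambda>h. (cmod (restr F x h))\<^sup>2) has_sum (\<Sum>g\<in>F. (cmod (restr F x g))\<^sup>2)) F"
          using F(1) by (rule has_sum_finite)
        then have "((\<lambda>h. (cmod (restr F x h))\<^sup>2) has_sum (\<Sum>g\<in>F. (cmod (x g))\<^sup>2)) F"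
          by (simp add: restr_def)
        then show ?thesis
          by (rule has_sum_cong_neutral[THEN iffD1, rotated -1]) (use F in \<open>auto simp: restr_def\<close>)
      qed
      have "((\<lambda>h. (cmod (x h))\<^sup>2 + - (cmod (restr F x h))\<^sup>2) has_sum (nrm2 G x + - (\<Sum>g\<in>F. (cmod (x g))\<^sup>2))) (carrier G)"
        by (rule has_sum_add[OF h1]) (simp add: has_sum_uminus h2)
      moreover have "\<And>h. (cmod (x h))\<^sup>2 + - (cmod (restr F x h))\<^sup>2 = (cmod (d F h))\<^sup>2"
        by (simp add: d_def restr_def)
      ultimately show ?thesis unfolding nrm2_def by (simp add: infsumI)
    qed
    finally have "norm (l2_inner G (T x) y - l2_inner G (T (restr F x)) y)
      \<le> sqrt (K * (nrm2 G x - (\<Sum>g\<in>F. (cmod (x g))\<^sup>2))) * sqrt (nrm2 G y)" .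
    moreover have "(\<Sum>g\<in>F. (cmod (x g))\<^sup>2) \<le> nrm2 G x"
      unfolding nrm2_def by (rule finite_sum_le_infsum[OF l2_summable[OF x] F]) simp
    ultimately show "norm (l2_inner G (T x) y - l2_inner G (T (restr F x)) y)
      \<le> norm (sqrt (K * (nrm2 G x - (\<Sum>g\<in>F. (cmod (x g))\<^sup>2)))) * sqrt (nrm2 G y)"
      using K(1) by simp
  qed
  have l0: "((\<lambda>F. sqrt (K * (nrm2 G x - (\<Sum>g\<in>F. (cmod (x g))\<^sup>2)))) \<longlongrightarrow> 0) ?F"
  proof -
    have "((\<lambda>F. \<Sum>g\<in>F. (cmod (x g))\<^sup>2) \<longlongrightarrow> nrm2 G x) ?F"
      unfolding nrm2_def by (rule infsum_tendsto[OF l2_summable[OF x]])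
    then have "((\<lambda>F. sqrt (K * (nrm2 G x - (\<Sum>g\<in>F. (cmod (x g))\<^sup>2)))) \<longlongrightarrow> sqrt (K * (nrm2 G x - nrm2 G x))) ?F"
      by (intro tendsto_intros)
    then show ?thesis by simp
  qed
  have "((\<lambda>F. l2_inner G (T x) y - l2_inner G (T (restr F x)) y) \<longlongrightarrow> 0) ?F"
    by (rule tendsto_0_le[OF l0 bnd])
  then have "((\<lambda>F. l2_inner G (T x) y - (l2_inner G (T x) y - l2_inner G (T (restr F x)) y)) \<longlongrightarrow> l2_inner G (T x) y - 0) ?F"
    by (intro tendsto_intros)
  then have lim2: "((\<lambda>F. l2_inner G (T (restr F x)) y) \<longlongrightarrow> l2_inner G (T x) y) ?F" by simp
  have lim3: "((\<lambda>F. \<Sum>g\<in>F. cnj (x g) * b g) \<longlongrightarrow> l2_inner G (T x) y) ?F"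
    by (rule Lim_transform_eventually[OF lim2]) (use eq in \<open>simp add: eventually_mono\<close>)
  have "l2_inner G x b = l2_inner G (T x) y"
    by (rule tendsto_unique[OF finite_subsets_at_top_neq_bot lim1 lim3])
  then show ?thesis by (simp add: b_def)
qed

lemma adj_bops:
  assumes T: "T \<in> bops G"
  shows "adj G T \<in> bops G"
proof -
  obtain K where K: "K > 0" "\<forall>x\<in>l2 G. nrm2 G (T x) \<le> K * nrm2 G x" using bops_bound[OF T] by blast
  show ?thesis
  proof (rule bopsI[where K = K])
    fix y assume y: "y \<in> l2 G"
    show "adj G T y \<in> l2 G" by (rule adj_l2(1)[OF T K y])
    show "nrm2 G (adj G T y) \<le> K * nrm2 G y" by (rule adj_l2(2)[OF T K y])
  next
    fix y z a b assume y: "y \<in> l2 G" and z: "z \<in> l2 G"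
    have yz: "(\<lambda>g. a * y g + b * z g) \<in> l2 G" by (rule l2_lin(1)[OF y z])
    show "adj G T (\<lambda>g. a * y g + b * z g) = (\<lambda>g. a * adj G T y g + b * adj G T z g)"
    proof
      fix g show "adj G T (\<lambda>g. a * y g + b * z g) g = a * adj G T y g + b * adj G T z g"
      proof (cases "g \<in> carrier G")
        case True
        have "T (dlt g) \<in> l2 G" by (rule bops_l2[OF T dlt_l2[OF True]])
        then show ?thesis using True y z yz by (simp add: adj_def inner_lin_right)
      next
        case False
        then show ?thesis using y z yz by (simp add: adj_def)
      qed
    qed
  next
    fix y assume "y \<notin> l2 G"
    then show "adj G T y = (\<lambda>_. 0)" by (simp add: adj_def)
  qed
qed

definition is_adj :: "('a, 'b) monoid_scheme \<Rightarrow> (('a \<Rightarrow> complex) \<Rightarrow> ('a \<Rightarrow> complex)) \<Rightarrow> (('a \<Rightarrow> complex) \<Rightarrow> ('a \<Rightarrow> complex)) \<Rightarrow> bool" where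
  "is_adj G T S \<longleftrightarrow> (\<forall>x\<in>l2 G. \<forall>y\<in>l2 G. l2_inner G (T x) y = l2_inner G x (S y))"

lemma is_adj_sym:
  assumes "is_adj G T S" shows "is_adj G S T"
  unfolding is_adj_def
proof (intro ballI)
  fix x y assume x: "x \<in> l2 G" and y: "y \<in> l2 G"
  have "l2_inner G (S x) y = cnj (l2_inner G y (S x))" by (rule inner_cnj)
  also have "\<dots> = cnj (l2_inner G (T y) x)" using assms x y by (simp add: is_adj_def)
  also have "\<dots> = l2_inner G x (T y)" by (simp only: inner_cnj[of G x "T y"])
  finally show "l2_inner G (S x) y = l2_inner G x (T y)" .
qed

lemma adj_is_adj: "T \<in> bops G \<Longrightarrow> is_adj G T (adj G T)"
  unfolding is_adj_def by (intro ballI adj_rel)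

lemma adj_unique:
  assumes "S1 \<in> bops G" "S2 \<in> bops G" "is_adj G T S1" "is_adj G T S2"
  shows "S1 = S2"
proof
  fix y show "S1 y = S2 y"
  proof (cases "y \<in> l2 G")
    case True
    show ?thesis
      by (rule l2_ext[OF bops_l2[OF assms(1) True] bops_l2[OF assms(2) True]])
         (use assms(3,4) True in \<open>auto simp: is_adj_def\<close>)
  next
    case False
    then show ?thesis using bops_out[OF assms(1)] bops_out[OF assms(2)] by simp
  qed
qed

lemma is_adj_comp:
  assumes "A \<in> bops G" "B \<in> bops G" "A' \<in> bops G" "B' \<in> bops G" "is_adj G A A'" "is_adj G B B'"
  shows "is_adj G (A \<circ> B) (B' \<circ> A')"
  unfolding is_adj_def
proof (intro ballI)
  fix x y assume x: "x \<in> l2 G" and y: "y \<in> l2 G"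
  have "l2_inner G (A (B x)) y = l2_inner G (B x) (A' y)"
    using assms(5) bops_l2[OF assms(2) x] y by (simp add: is_adj_def)
  also have "\<dots> = l2_inner G x (B' (A' y))"
    using assms(6) bops_l2[OF assms(3) y] x by (simp add: is_adj_def)
  finally show "l2_inner G ((A \<circ> B) x) y = l2_inner G x ((B' \<circ> A') y)" by simp
qed

lemma comm_adj:
  assumes "A \<in> bops G" "B \<in> bops G" "A' \<in> bops G" "B' \<in> bops G" "is_adj G A A'" "is_adj G B B'"
    "A \<circ> B = B \<circ> A"
  shows "A' \<circ> B' = B' \<circ> A'"
proof -
  have "is_adj G (A \<circ> B) (B' \<circ> A')" by (rule is_adj_comp[OF assms(1-6)])
  moreover have "is_adj G (B \<circ> A) (A' \<circ> B')" by (rule is_adj_comp[OF assms(2,1,4,3,6,5)])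
  ultimately have "is_adj G (A \<circ> B) (A' \<circ> B')" using assms(7) by simp
  from adj_unique[OF bops_comp[OF assms(4,3)] bops_comp[OF assms(3,4)] \<open>is_adj G (A \<circ> B) (B' \<circ> A')\<close> this]
  show ?thesis by simp
qed

lemma star_closed_is_adj: "star_closed G M \<longleftrightarrow> (\<forall>T\<in>M. \<exists>S\<in>M. is_adj G T S)"
  unfolding star_closed_def is_adj_def by (rule refl)

lemma commutant_adj_closed:
  assumes "S \<subseteq> bops G" "star_closed G S" "A \<in> commutant G S"
  shows "adj G A \<in> commutant G S"
proof -
  have A: "A \<in> bops G" "\<forall>s\<in>S. A \<circ> s = s \<circ> A" using assms(3) by (auto simp: commutant_def)
  have "\<forall>s\<in>S. adj G A \<circ> s = s \<circ> adj G A"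
  proof
    fix s assume s: "s \<in> S"
    obtain s' where s': "s' \<in> S" "is_adj G s s'" using assms(2) s by (auto simp: star_closed_is_adj)
    have "adj G A \<circ> s = s \<circ> adj G A"
      by (rule comm_adj[OF A(1) _ adj_bops[OF A(1)] _ adj_is_adj[OF A(1)] is_adj_sym[OF s'(2)]])
         (use assms(1) s s' A(2) in auto)
    then show "adj G A \<circ> s = s \<circ> adj G A" .
  qed
  then show ?thesis using adj_bops[OF A(1)] by (simp add: commutant_def)
qed

lemma commutant_star_closed:
  assumes "S \<subseteq> bops G" "star_closed G S"
  shows "star_closed G (commutant G S)"
  unfolding star_closed_is_adj
proof
  fix T assume T: "T \<in> commutant G S"
  have "T \<in> bops G" using T by (simp add: commutant_def)
  then show "\<exists>S'\<in>commutant G S. is_adj G T S'"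
  proof (intro bexI[of _ "adj G T"])
    show "is_adj G T (adj G T)" by (rule adj_is_adj[OF \<open>T \<in> bops G\<close>])
    show "adj G T \<in> commutant G S" by (rule commutant_adj_closed[OF assms T])
  qed
qed

lemma commutant_bops: "commutant G X \<subseteq> bops G"
  by (auto simp: commutant_def)

lemma commutant_anti: "X \<subseteq> Y \<Longrightarrow> commutant G Y \<subseteq> commutant G X"
  by (auto simp: commutant_def)

lemma commutant_incl: "X \<subseteq> bops G \<Longrightarrow> X \<subseteq> commutant G (commutant G X)"
  by (auto simp: commutant_def)

lemma commutant3:
  assumes X: "X \<subseteq> bops G"
  shows "commutant G (commutant G (commutant G X)) = commutant G X"
proof (rule subset_antisym)
  show "commutant G (commutant G (commutant G X)) \<subseteq> commutant G X"
    by (rule commutant_anti[OF commutant_incl[OF X]])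
  show "commutant G X \<subseteq> commutant G (commutant G (commutant G X))"
    by (rule commutant_incl[OF commutant_bops])
qed

lemma vN_bicommutant:
  assumes "S \<subseteq> bops G" "star_closed G S"
  shows "von_neumann_algebra G (commutant G (commutant G S))"
proof -
  have b: "commutant G (commutant G S) \<subseteq> bops G" by (rule commutant_bops)
  have st: "star_closed G (commutant G (commutant G S))"
    by (rule commutant_star_closed[OF commutant_bops commutant_star_closed[OF assms]])
  have "commutant G (commutant G (commutant G (commutant G S))) = commutant G (commutant G S)"
    by (rule commutant3[OF commutant_bops])
  then show ?thesis unfolding von_neumann_algebra_def using b st by simp
qed


definition opsum :: "('a, 'b) monoid_scheme \<Rightarrow> 'i set \<Rightarrow> ('i \<Rightarrow> complex) \<Rightarrow> ('i \<Rightarrow> ('a \<Rightarrow> complex) \<Rightarrow> ('a \<Rightarrow> complex)) \<Rightarrow> ('a \<Rightarrow> complex) \<Rightarrow> ('a \<Rightarrow> complex)" where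
  "opsum G I c T x = (if x \<in> l2 G then (\<lambda>h. \<Sum>i\<in>I. c i * T i x h) else (\<lambda>_. 0))"

definition lin2 :: "('a, 'b) monoid_scheme \<Rightarrow> complex \<Rightarrow> (('a \<Rightarrow> complex) \<Rightarrow> ('a \<Rightarrow> complex)) \<Rightarrow> complex \<Rightarrow> (('a \<Rightarrow> complex) \<Rightarrow> ('a \<Rightarrow> complex)) \<Rightarrow> ('a \<Rightarrow> complex) \<Rightarrow> ('a \<Rightarrow> complex)" where
  "lin2 G a A b B x = (if x \<in> l2 G then (\<lambda>h. a * A x h + b * B x h) else (\<lambda>_. 0))"

lemma lin2_bops:
  assumes A: "A \<in> bops G" and B: "B \<in> bops G"
  shows "lin2 G a A b B \<in> bops G"
proof -
  obtain KA where KA: "KA > 0" "\<forall>x\<in>l2 G. nrm2 G (A x) \<le> KA * nrm2 G x" using bops_bound[OF A] by blast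
  obtain KB where KB: "KB > 0" "\<forall>x\<in>l2 G. nrm2 G (B x) \<le> KB * nrm2 G x" using bops_bound[OF B] by blast
  show ?thesis
  proof (rule bopsI[where K = "2 * (cmod a)\<^sup>2 * KA + 2 * (cmod b)\<^sup>2 * KB"])
    fix x assume x: "x \<in> l2 G"
    show "lin2 G a A b B x \<in> l2 G"
      unfolding lin2_def using x by (simp add: l2_lin(1)[OF bops_l2[OF A x] bops_l2[OF B x]])
    have "nrm2 G (lin2 G a A b B x) \<le> 2 * (cmod a)\<^sup>2 * nrm2 G (A x) + 2 * (cmod b)\<^sup>2 * nrm2 G (B x)"
      unfolding lin2_def using x by (simp add: l2_lin(2)[OF bops_l2[OF A x] bops_l2[OF B x]])
    also have "\<dots> \<le> 2 * (cmod a)\<^sup>2 * (KA * nrm2 G x) + 2 * (cmod b)\<^sup>2 * (KB * nrm2 G x)"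
      using KA(2) KB(2) x by (intro add_mono mult_left_mono) auto
    finally show "nrm2 G (lin2 G a A b B x) \<le> (2 * (cmod a)\<^sup>2 * KA + 2 * (cmod b)\<^sup>2 * KB) * nrm2 G x"
      by (simp add: algebra_simps)
  next
    fix x y :: "'a \<Rightarrow> complex" and c d assume x: "x \<in> l2 G" and y: "y \<in> l2 G"
    have xy: "(\<lambda>g. c * x g + d * y g) \<in> l2 G" by (rule l2_lin(1)[OF x y])
    show "lin2 G a A b B (\<lambda>g. c * x g + d * y g) = (\<lambda>g. c * lin2 G a A b B x g + d * lin2 G a A b B y g)"
      unfolding lin2_def using x y xy bops_lin[OF A x y, of c d] bops_lin[OF B x y, of c d]
      by (simp add: algebra_simps)
  next
    fix x assume "x \<notin> l2 G"
    then show "lin2 G a A b B x = (\<lambda>_. 0)" by (simp add: lin2_def)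
  qed
qed

lemma opsum_insert:
  assumes "finite F" "j \<notin> F"
  shows "opsum G (insert j F) c T = lin2 G (c j) (T j) 1 (opsum G F c T)"
proof
  fix x show "opsum G (insert j F) c T x = lin2 G (c j) (T j) 1 (opsum G F c T) x"
    using assms by (simp add: opsum_def lin2_def)
qed

lemma opsum_empty: "opsum G {} c T = lin2 G 0 (T0::('a \<Rightarrow> complex) \<Rightarrow> ('a \<Rightarrow> complex)) 0 T0"
  by (rule ext) (simp add: opsum_def lin2_def)

lemma opsum_bops:
  assumes "finite I" "\<And>i. i \<in> I \<Longrightarrow> T i \<in> bops G"
  shows "opsum G I c T \<in> bops G"
  using assms
proof (induction I rule: finite_induct)
  case empty
  have b0: "opsum G {} c T \<in> bops G"
  proof (rule bopsI[where K = 0])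
    fix x assume "x \<in> l2 G" then show "opsum G {} c T x \<in> l2 G" by (simp add: opsum_def l2_zero)
  next
    fix x assume "x \<in> l2 G" then show "nrm2 G (opsum G {} c T x) \<le> 0 * nrm2 G x" by (simp add: opsum_def nrm2_def)
  next
    fix x y a b assume "x \<in> l2 G" "y \<in> l2 G"
    then show "opsum G {} c T (\<lambda>g. a * x g + b * y g) = (\<lambda>g. a * opsum G {} c T x g + b * opsum G {} c T y g)"
      by (simp add: opsum_def l2_lin)
  next
    fix x assume "x \<notin> l2 G" then show "opsum G {} c T x = (\<lambda>_. 0)" by (simp add: opsum_def)
  qed
  then show ?case .
next
  case (insert j F)
  then show ?case unfolding opsum_insert[OF insert.hyps] by (intro lin2_bops) auto
qed

lemma opsum_l2_apply:
  assumes "x \<in> l2 G"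
  shows "opsum G I c T x = (\<lambda>h. \<Sum>i\<in>I. c i * T i x h)"
  using assms by (simp add: opsum_def)

lemma opsum_comm:
  assumes "finite I" "\<And>i. i \<in> I \<Longrightarrow> T i \<in> bops G" "A \<in> bops G"
    "\<And>i. i \<in> I \<Longrightarrow> A \<circ> T i = T i \<circ> A"
  shows "A \<circ> opsum G I c T = opsum G I c T \<circ> A"
proof
  fix x show "(A \<circ> opsum G I c T) x = (opsum G I c T \<circ> A) x"
  proof (cases "x \<in> l2 G")
    case True
    have Ax: "A x \<in> l2 G" by (rule bops_l2[OF assms(3) True])
    have pre: "\<And>i. i \<in> I \<Longrightarrow> T i x \<in> l2 G" using assms(2) True by (simp add: bops_l2)
    have "A (opsum G I c T x) = A (\<lambda>h. \<Sum>i\<in>I. c i * T i x h)" by (simp add: opsum_def True)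
    also have "\<dots> = (\<lambda>h. \<Sum>i\<in>I. c i * A (T i x) h)"
      by (rule conjunct2[OF bops_finsum[OF assms(3,1) pre, where c = c]])
    also have "\<dots> = (\<lambda>h. \<Sum>i\<in>I. c i * T i (A x) h)"
    proof -
      have "\<And>i. i \<in> I \<Longrightarrow> A (T i x) = T i (A x)"
      proof -
        fix i assume "i \<in> I"
        then have "(A \<circ> T i) x = (T i \<circ> A) x" using assms(4) by simp
        then show "A (T i x) = T i (A x)" by simp
      qed
      then show ?thesis by (intro ext sum.cong) auto
    qed
    also have "\<dots> = opsum G I c T (A x)" by (simp add: opsum_def Ax)
    finally show ?thesis by simp
  next
    case False
    have "A (opsum G I c T x) = A (\<lambda>_. 0)" by (simp add: opsum_def False)
    also have "\<dots> = (\<lambda>_. 0)" by (rule bops_zero[OF assms(3)])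
    finally have 1: "A (opsum G I c T x) = (\<lambda>_. 0)" .
    have "opsum G I c T (A x) = opsum G I c T (\<lambda>_. 0)" by (simp add: bops_out[OF assms(3) False])
    also have "\<dots> = (\<lambda>_. 0)"
    proof -
      have z: "\<And>i. i \<in> I \<Longrightarrow> T i (\<lambda>_. 0) = (\<lambda>_. 0)" by (rule bops_zero[OF assms(2)])
      show ?thesis by (auto simp: opsum_def l2_zero z intro!: sum.neutral)
    qed
    finally show ?thesis using 1 by simp
  qed
qed

lemma inner_sum_left:
  assumes "finite I" "\<And>i. i \<in> I \<Longrightarrow> u i \<in> l2 G" "y \<in> l2 G"
  shows "l2_inner G (\<lambda>h. \<Sum>i\<in>I. c i * u i h) y = (\<Sum>i\<in>I. cnj (c i) * l2_inner G (u i) y)"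
proof -
  have eq: "(\<lambda>h. cnj (\<Sum>i\<in>I. c i * u i h) * y h) = (\<lambda>h. \<Sum>i\<in>I. cnj (c i) * (cnj (u i h) * y h))"
    by (simp add: cnj_sum sum_distrib_right mult.assoc)
  have "((\<lambda>h. cnj (\<Sum>i\<in>I. c i * u i h) * y h) has_sum (\<Sum>i\<in>I. cnj (c i) * l2_inner G (u i) y)) (carrier G)"
    unfolding eq
    by (rule has_sum_finsum[OF assms(1)]) (rule has_sum_cmult_right[OF inner_has_sum[OF assms(2) assms(3)]])
  then show ?thesis unfolding l2_inner_def by (rule infsumI)
qed

lemma inner_sum_right:
  assumes "finite I" "\<And>i. i \<in> I \<Longrightarrow> u i \<in> l2 G" "y \<in> l2 G"
  shows "l2_inner G y (\<lambda>h. \<Sum>i\<in>I. c i * u i h) = (\<Sum>i\<in>I. c i * l2_inner G y (u i))"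
proof -
  have "l2_inner G y (\<lambda>h. \<Sum>i\<in>I. c i * u i h) = cnj (l2_inner G (\<lambda>h. \<Sum>i\<in>I. c i * u i h) y)"
    by (rule inner_cnj)
  also have "\<dots> = cnj (\<Sum>i\<in>I. cnj (c i) * l2_inner G (u i) y)" by (simp only: inner_sum_left[OF assms])
  also have "\<dots> = (\<Sum>i\<in>I. c i * cnj (l2_inner G (u i) y))" by (simp add: cnj_sum)
  also have "\<dots> = (\<Sum>i\<in>I. c i * l2_inner G y (u i))" by (simp add: inner_cnj[of G y])
  finally show ?thesis .
qed

lemma opsum_adj:
  assumes "finite I" "\<And>i. i \<in> I \<Longrightarrow> T i \<in> bops G" "\<And>i. i \<in> I \<Longrightarrow> T' i \<in> bops G"
    "\<And>i. i \<in> I \<Longrightarrow> is_adj G (T i) (T' i)"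
  shows "is_adj G (opsum G I c T) (opsum G I (\<lambda>i. cnj (c i)) T')"
  unfolding is_adj_def
proof (intro ballI)
  fix x y assume x: "x \<in> l2 G" and y: "y \<in> l2 G"
  have "l2_inner G (opsum G I c T x) y = (\<Sum>i\<in>I. cnj (c i) * l2_inner G (T i x) y)"
    unfolding opsum_l2_apply[OF x] by (rule inner_sum_left[OF assms(1) bops_l2[OF assms(2) x] y])
  also have "\<dots> = (\<Sum>i\<in>I. cnj (c i) * l2_inner G x (T' i y))"
    using assms(4) x y by (intro sum.cong) (auto simp: is_adj_def)
  also have "\<dots> = l2_inner G x (opsum G I (\<lambda>i. cnj (c i)) T' y)"
    unfolding opsum_l2_apply[OF y] by (rule inner_sum_right[OF assms(1) bops_l2[OF assms(3) y] x, symmetric])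
  finally show "l2_inner G (opsum G I c T x) y = l2_inner G x (opsum G I (\<lambda>i. cnj (c i)) T' y)" .
qed

definition Pset :: "('a, 'b) monoid_scheme \<Rightarrow> 'a set \<Rightarrow> ('a \<Rightarrow> complex) \<Rightarrow> ('a \<Rightarrow> complex)" where
  "Pset G S x = (if x \<in> l2 G then (\<lambda>h. if h \<in> S then x h else 0) else (\<lambda>_. 0))"

lemma Pset_bops: "Pset G S \<in> bops G"
proof (rule bopsI[where K = 1])
  fix x assume x: "x \<in> l2 G"
  have z: "\<And>g. g \<notin> carrier G \<Longrightarrow> Pset G S x g = 0" using x by (simp add: Pset_def l2_zero_off)
  have le: "\<And>g. g \<in> carrier G \<Longrightarrow> (cmod (Pset G S x g))\<^sup>2 \<le> (cmod (x g))\<^sup>2" using x by (simp add: Pset_def)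
  show "Pset G S x \<in> l2 G" by (rule l2_dom(1)[OF z l2_summable[OF x] le])
  show "nrm2 G (Pset G S x) \<le> 1 * nrm2 G x" using l2_dom(2)[OF z l2_summable[OF x] le] by (simp add: nrm2_def)
next
  fix x y :: "'a \<Rightarrow> complex" and a b assume "x \<in> l2 G" "y \<in> l2 G"
  then show "Pset G S (\<lambda>g. a * x g + b * y g) = (\<lambda>g. a * Pset G S x g + b * Pset G S y g)"
    by (auto simp: Pset_def l2_lin)
next
  fix x assume "x \<notin> l2 G" then show "Pset G S x = (\<lambda>_. 0)" by (simp add: Pset_def)
qed

context group
begin

lemma lreg_l2_apply:
  "x \<in> l2 G \<Longrightarrow> lreg G g x = (\<lambda>h. if h \<in> carrier G then x (inv g \<otimes> h) else 0)"
  by (simp add: lreg_def)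

lemma bij_left:
  assumes "g \<in> carrier G"
  shows "bij_betw (\<lambda>h. inv g \<otimes> h) (carrier G) (carrier G)"
  by (rule bij_betw_byWitness[where f' = "\<lambda>h. g \<otimes> h"])
     (use assms in \<open>auto simp: m_assoc[symmetric]\<close>)

lemma lreg_l2:
  assumes g: "g \<in> carrier G" and x: "x \<in> l2 G"
  shows "lreg G g x \<in> l2 G" "nrm2 G (lreg G g x) = nrm2 G x"
proof -
  have e: "\<And>h. h \<in> carrier G \<Longrightarrow> (cmod (lreg G g x h))\<^sup>2 = (cmod (x (inv g \<otimes> h)))\<^sup>2"
    using x by (simp add: lreg_def)
  have s: "(\<lambda>h. (cmod (x (inv g \<otimes> h)))\<^sup>2) summable_on carrier G"
    using summable_on_reindex_bij_betw[OF bij_left[OF g], of "\<lambda>h. (cmod (x h))\<^sup>2"] l2_summable[OF x] by simp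
  have "(\<lambda>h. (cmod (lreg G g x h))\<^sup>2) summable_on carrier G"
    using s by (rule summable_on_cong[THEN iffD1, rotated]) (simp add: e)
  then show "lreg G g x \<in> l2 G" using x by (simp add: l2_def lreg_def)
  have "nrm2 G (lreg G g x) = (\<Sum>\<^sub>\<infinity>h\<in>carrier G. (cmod (x (inv g \<otimes> h)))\<^sup>2)"
    unfolding nrm2_def by (rule infsum_cong) (simp add: e)
  also have "\<dots> = nrm2 G x"
    unfolding nrm2_def by (rule infsum_reindex_bij_betw[OF bij_left[OF g]])
  finally show "nrm2 G (lreg G g x) = nrm2 G x" .
qed

lemma lreg_bops:
  assumes g: "g \<in> carrier G"
  shows "lreg G g \<in> bops G"
proof (rule bopsI[where K = 1])
  fix x assume x: "x \<in> l2 G"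
  show "lreg G g x \<in> l2 G" by (rule lreg_l2(1)[OF g x])
  show "nrm2 G (lreg G g x) \<le> 1 * nrm2 G x" by (simp add: lreg_l2(2)[OF g x])
next
  fix x y :: "'a \<Rightarrow> complex" and a b assume x: "x \<in> l2 G" and y: "y \<in> l2 G"
  then show "lreg G g (\<lambda>h. a * x h + b * y h) = (\<lambda>h. a * lreg G g x h + b * lreg G g y h)"
    by (auto simp: lreg_def l2_lin)
next
  fix x assume "x \<notin> l2 G" then show "lreg G g x = (\<lambda>_. 0)" by (simp add: lreg_def)
qed

lemma lreg_comp:
  assumes g: "g \<in> carrier G" and k: "k \<in> carrier G"
  shows "lreg G g \<circ> lreg G k = lreg G (g \<otimes> k)"
proof
  fix x show "(lreg G g \<circ> lreg G k) x = lreg G (g \<otimes> k) x"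
  proof (cases "x \<in> l2 G")
    case True
    have "lreg G k x \<in> l2 G" by (rule lreg_l2(1)[OF k True])
    then show ?thesis using True g k
      by (auto simp: lreg_def inv_mult_group m_assoc fun_eq_iff)
  next
    case False
    then show ?thesis using bops_zero[OF lreg_bops[OF g]] by (simp add: lreg_def)
  qed
qed

lemma lreg_one_apply: "x \<in> l2 G \<Longrightarrow> lreg G \<one> x = x"
  by (auto simp: lreg_def fun_eq_iff l2_zero_off)

lemma lreg_one_left: "A \<in> bops G \<Longrightarrow> lreg G \<one> \<circ> A = A"
proof
  fix x assume A: "A \<in> bops G"
  show "(lreg G \<one> \<circ> A) x = A x"
  proof (cases "x \<in> l2 G")
    case True then show ?thesis using A by (simp add: lreg_one_apply bops_l2)
  next
    case False
    have "A x = (\<lambda>_. 0)" by (rule bops_out[OF A False])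
    then show ?thesis unfolding comp_apply by (simp add: lreg_def l2_zero)
  qed
qed

lemma lreg_one_right: "A \<in> bops G \<Longrightarrow> A \<circ> lreg G \<one> = A"
proof
  fix x assume A: "A \<in> bops G"
  show "(A \<circ> lreg G \<one>) x = A x"
  proof (cases "x \<in> l2 G")
    case True then show ?thesis by (simp add: lreg_one_apply)
  next
    case False then show ?thesis using bops_out[OF A False] bops_zero[OF A] by (simp add: lreg_def)
  qed
qed

lemma lreg_adj:
  assumes g: "g \<in> carrier G"
  shows "is_adj G (lreg G g) (lreg G (inv g))"
  unfolding is_adj_def
proof (intro ballI)
  fix x y assume x: "x \<in> l2 G" and y: "y \<in> l2 G"
  have "l2_inner G (lreg G g x) y = (\<Sum>\<^sub>\<infinity>h\<in>carrier G. cnj (x (inv g \<otimes> h)) * y h)"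
    unfolding l2_inner_def by (rule infsum_cong) (simp add: lreg_def x)
  also have "\<dots> = (\<Sum>\<^sub>\<infinity>h\<in>carrier G. cnj (x (inv g \<otimes> (g \<otimes> h))) * y (g \<otimes> h))"
    using infsum_reindex_bij_betw[OF bij_left[OF inv_closed[OF g]], of "\<lambda>h. cnj (x (inv g \<otimes> h)) * y h"] g
    by simp
  also have "\<dots> = (\<Sum>\<^sub>\<infinity>h\<in>carrier G. cnj (x h) * y (g \<otimes> h))"
    by (rule infsum_cong) (simp add: g m_assoc[symmetric])
  also have "\<dots> = l2_inner G x (lreg G (inv g) y)"
    unfolding l2_inner_def by (rule infsum_cong) (simp add: lreg_def y g)
  finally show "l2_inner G (lreg G g x) y = l2_inner G x (lreg G (inv g) y)" .
qed

lemma Pset_comm_lreg: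
  assumes N: "subgroup N G" and n: "n \<in> N"
  shows "lreg G n \<circ> Pset G N = Pset G N \<circ> lreg G n"
proof
  have nc: "n \<in> carrier G" by (rule subgroup.mem_carrier[OF N n])
  fix x show "(lreg G n \<circ> Pset G N) x = (Pset G N \<circ> lreg G n) x"
  proof (cases "x \<in> l2 G")
    case True
    have Px: "Pset G N x \<in> l2 G" by (rule bops_l2[OF Pset_bops True])
    have Lx: "lreg G n x \<in> l2 G" by (rule lreg_l2(1)[OF nc True])
    have iff: "\<And>h. h \<in> carrier G \<Longrightarrow> (inv n \<otimes> h \<in> N) = (h \<in> N)"
    proof -
      fix h assume h: "h \<in> carrier G"
      show "(inv n \<otimes> h \<in> N) = (h \<in> N)"
      proof
        assume "inv n \<otimes> h \<in> N"
        then have "n \<otimes> (inv n \<otimes> h) \<in> N" by (rule subgroup.m_closed[OF N n])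
        then show "h \<in> N" using h nc by (simp add: m_assoc[symmetric])
      next
        assume "h \<in> N" then show "inv n \<otimes> h \<in> N" by (rule subgroup.m_closed[OF N subgroup.m_inv_closed[OF N n]])
      qed
    qed
    show ?thesis
      using True Px Lx iff subgroup.subset[OF N] by (auto simp: Pset_def lreg_def fun_eq_iff)
  next
    case False
    have 1: "Pset G N x = (\<lambda>_. 0)" by (simp add: Pset_def False)
    have 2: "lreg G n x = (\<lambda>_. 0)" by (simp add: lreg_def False)
    show ?thesis unfolding comp_apply 1 2 bops_zero[OF lreg_bops[OF nc]] bops_zero[OF Pset_bops] ..
  qed
qed

end


definition flip :: "int \<Rightarrow> (int \<Rightarrow> bool) \<Rightarrow> (int \<Rightarrow> bool)" where
  "flip j f = f(j := \<not> f j)"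
definition pf :: "int \<Rightarrow> ((int \<Rightarrow> bool) \<Rightarrow> complex) \<Rightarrow> (int \<Rightarrow> bool) \<Rightarrow> complex" where
  "pf j X f = (X f - X (flip j f) - X (flip (j + 1) f) + X (flip j (flip (j + 1) f))) / 4"
definition Wf :: "((int \<Rightarrow> bool) \<Rightarrow> complex) \<Rightarrow> (int \<Rightarrow> bool) \<Rightarrow> complex" where
  "Wf X f = (if f 0 then X f - (X f + X (flip (-1) f) + X (flip 1 f) + X (flip (-1) (flip 1 f))) / 2 else X f)"

lemma key_m1: "Wf (pf (-1) X) f = pf (-1) (Wf X) f"
  by (cases "f (-1)"; cases "f 0"; cases "f 1") (simp_all add: Wf_def pf_def flip_def fun_upd_twist fun_upd_idem field_simps)
lemma key_m2: "Wf (pf (-2) X) f = pf (-2) (Wf X) f"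
  by (cases "f (-1)"; cases "f 0"; cases "f 1") (simp_all add: Wf_def pf_def flip_def fun_upd_twist fun_upd_idem field_simps)
lemma key_0: "Wf (pf 0 X) f = pf 0 (Wf X) f"
  by (cases "f (-1)"; cases "f 0"; cases "f 1") (simp_all add: Wf_def pf_def flip_def fun_upd_twist fun_upd_idem field_simps)
lemma key_1: "Wf (pf 1 X) f = pf 1 (Wf X) f"
  by (cases "f (-1)"; cases "f 0"; cases "f 1") (simp_all add: Wf_def pf_def flip_def fun_upd_twist fun_upd_idem field_simps)
lemma key_far:
  assumes "j \<noteq> -2" "j \<noteq> -1" "j \<noteq> 0" "j \<noteq> 1"
  shows "Wf (pf j X) f = pf j (Wf X) f"
proof -
  have "j \<noteq> -1" "j + 1 \<noteq> -1" "j + 1 \<noteq> 0" "j + 1 \<noteq> 1" "j \<noteq> 1" "j \<noteq> 0" using assms by auto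
  then show ?thesis
    by (cases "f 0") (simp_all add: Wf_def pf_def flip_def fun_upd_twist fun_upd_idem field_simps)
qed

lemma key: "Wf (pf j X) f = pf j (Wf X) f"
proof -
  consider "j = -2" | "j = -1" | "j = 0" | "j = 1" | "j \<noteq> -2 \<and> j \<noteq> -1 \<and> j \<noteq> 0 \<and> j \<noteq> 1" by blast
  then show ?thesis
    by cases (use key_m2 key_m1 key_0 key_1 key_far in auto)
qed

lemma flip_C: "((flip j f, m) \<in> carrier lamplighter) = ((f, m) \<in> carrier lamplighter)"
proof -
  have 1: "{k. flip j f k} \<subseteq> insert j {k. f k}" by (auto simp: flip_def)
  have 2: "{k. f k} \<subseteq> insert j {k. flip j f k}" by (auto simp: flip_def)
  show ?thesis unfolding LL_carrier using finite_subset[OF 1] finite_subset[OF 2] by auto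
qed

lemma lreg_H:
  assumes "finite {k. d k}" "x \<in> l2 lamplighter"
  shows "lreg lamplighter (d, 0) x (f, m) = (if (f, m) \<in> carrier lamplighter then x (\<lambda>k. d k \<noteq> f k, m) else 0)"
proof -
  have "(d, 0) \<in> carrier lamplighter" using assms(1) by (simp add: LL_carrier)
  then show ?thesis using LL_inv_mult[of d 0 f m] assms(2) by (simp add: lreg_def)
qed

lemma xor_e: "(\<lambda>k. (k = j) \<noteq> f k) = flip j f" by (auto simp: flip_def fun_eq_iff)
lemma xor_e2: "(\<lambda>k. (k = j \<or> k = j + 1) \<noteq> f k) = flip j (flip (j + 1) f)" by (auto simp: flip_def fun_eq_iff)
lemma xor_0: "(\<lambda>k. False \<noteq> f k) = f" by auto
lemma xor_e': "(\<lambda>k. (k = j) = (\<not> f k)) = flip j f" by (auto simp: flip_def fun_eq_iff)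
lemma xor_e2': "(\<lambda>k. (k = j \<or> k = j + 1) = (\<not> f k)) = flip j (flip (j + 1) f)" by (auto simp: flip_def fun_eq_iff)
lemma xor_e3': "(\<lambda>k. (k = -1 \<or> k = 1) = (\<not> f k)) = flip (-1) (flip 1 f)" by (auto simp: flip_def fun_eq_iff)
lemma xor_e3: "(\<lambda>k. (k = -1 \<or> k = 1) \<noteq> f k) = flip (-1) (flip 1 f)" by (auto simp: flip_def fun_eq_iff)

definition PI :: "nat set" where "PI = {0, 1, 2, 3}"

definition pk :: "int \<Rightarrow> nat \<Rightarrow> (int \<Rightarrow> bool) \<times> int" where
  "pk j i = (if i = 0 then (\<lambda>_. False, 0) else if i = 1 then (\<lambda>k. k = j, 0)
     else if i = 2 then (\<lambda>k. k = j + 1, 0) else (\<lambda>k. k = j \<or> k = j + 1, 0))"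
definition pc :: "nat \<Rightarrow> complex" where
  "pc i = (if i = 0 \<or> i = 3 then 1 / 4 else - 1 / 4)"
definition pn :: "int \<Rightarrow> ((int \<Rightarrow> bool) \<times> int \<Rightarrow> complex) \<Rightarrow> ((int \<Rightarrow> bool) \<times> int \<Rightarrow> complex)" where
  "pn j = opsum lamplighter PI pc (\<lambda>i. lreg lamplighter (pk j i))"

definition qk :: "nat \<Rightarrow> (int \<Rightarrow> bool) \<times> int" where
  "qk i = (if i = 0 then (\<lambda>_. False, 0) else if i = 1 then (\<lambda>k. k = -1, 0)
     else if i = 2 then (\<lambda>k. k = 1, 0) else (\<lambda>k. k = -1 \<or> k = 1, 0))"
definition Qop :: "((int \<Rightarrow> bool) \<times> int \<Rightarrow> complex) \<Rightarrow> ((int \<Rightarrow> bool) \<times> int \<Rightarrow> complex)" where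
  "Qop = opsum lamplighter PI (\<lambda>_. 1 / 4) (\<lambda>i. lreg lamplighter (qk i))"
definition P0 :: "((int \<Rightarrow> bool) \<times> int \<Rightarrow> complex) \<Rightarrow> ((int \<Rightarrow> bool) \<times> int \<Rightarrow> complex)" where
  "P0 = Pset lamplighter {h. fst h 0}"
definition Wop :: "((int \<Rightarrow> bool) \<times> int \<Rightarrow> complex) \<Rightarrow> ((int \<Rightarrow> bool) \<times> int \<Rightarrow> complex)" where
  "Wop = lin2 lamplighter 1 (lreg lamplighter \<one>\<^bsub>lamplighter\<^esub>) (-2) (Qop \<circ> P0)"

lemma fin2: "finite {k::int. k = a \<or> k = b}"
proof -
  have "{k::int. k = a \<or> k = b} = {a, b}" by auto
  then show ?thesis by simp
qed

lemma pk_C: "pk j i \<in> carrier lamplighter"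
  by (simp add: pk_def LL_carrier fin2)
lemma qk_C: "qk i \<in> carrier lamplighter"
  by (simp add: qk_def LL_carrier fin2)

lemma inv_H: "finite {k. d k} \<Longrightarrow> inv\<^bsub>lamplighter\<^esub> (d, 0) = (d, 0)"
  by (simp add: LL_inv LL_carrier)

lemma pk_inv: "inv\<^bsub>lamplighter\<^esub> (pk j i) = pk j i"
  by (simp add: pk_def inv_H fin2)

lemma lreg_bops_LL: "g \<in> carrier lamplighter \<Longrightarrow> lreg lamplighter g \<in> bops lamplighter"
  by (rule group.lreg_bops[OF LL_group])

lemma pn_bops: "pn j \<in> bops lamplighter"
  unfolding pn_def by (rule opsum_bops) (auto simp: PI_def intro: lreg_bops_LL pk_C)

lemma Qop_bops: "Qop \<in> bops lamplighter"
  unfolding Qop_def by (rule opsum_bops) (auto simp: PI_def intro: lreg_bops_LL qk_C)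

lemma Wop_bops: "Wop \<in> bops lamplighter"
proof -
  have "\<one>\<^bsub>lamplighter\<^esub> \<in> carrier lamplighter" by (simp add: LL_one LL_carrier)
  then show ?thesis unfolding Wop_def P0_def by (intro lin2_bops bops_comp Qop_bops Pset_bops lreg_bops_LL)
qed

lemma pn_self_adj: "is_adj lamplighter (pn j) (pn j)"
proof -
  have "is_adj lamplighter (pn j) (opsum lamplighter PI (\<lambda>i. cnj (pc i)) (\<lambda>i. lreg lamplighter (inv\<^bsub>lamplighter\<^esub> (pk j i))))"
    unfolding pn_def
    by (rule opsum_adj) (auto simp: PI_def intro: lreg_bops_LL pk_C group.lreg_adj[OF LL_group]
        group.inv_closed[OF LL_group])
  moreover have "(\<lambda>i. cnj (pc i)) = pc" by (auto simp: pc_def fun_eq_iff)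
  ultimately show ?thesis by (simp add: pk_inv pn_def)
qed

lemma sum_PI: "(\<Sum>i\<in>PI. F i) = F 0 + (F 1 + (F 2 + F 3))"
  by (simp add: PI_def)

lemma pn_apply:
  assumes x: "x \<in> l2 lamplighter"
  shows "pn j x (f, m) = (if (f, m) \<in> carrier lamplighter then pf j (\<lambda>f'. x (f', m)) f else 0)"
proof -
  have "pn j x (f, m) = (\<Sum>i\<in>PI. pc i * lreg lamplighter (pk j i) x (f, m))"
    unfolding pn_def by (simp add: opsum_l2_apply[OF x])
  also have "\<dots> = (if (f, m) \<in> carrier lamplighter then pf j (\<lambda>f'. x (f', m)) f else 0)"
    unfolding sum_PI
    by (simp add: pk_def pc_def lreg_H[OF _ x] fin2 xor_e' xor_e2', simp add: pf_def field_simps)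
  finally show ?thesis .
qed

lemma Wop_apply:
  assumes x: "x \<in> l2 lamplighter"
  shows "Wop x (f, m) = (if (f, m) \<in> carrier lamplighter then Wf (\<lambda>f'. x (f', m)) f else 0)"
proof -
  have Px: "P0 x \<in> l2 lamplighter" unfolding P0_def by (rule bops_l2[OF Pset_bops x])
  have P0a: "\<And>f' m'. P0 x (f', m') = (if f' 0 then x (f', m') else 0)"
    unfolding P0_def Pset_def using x by simp
  have fl: "\<And>f'. flip (-1) f' 0 = f' 0" "\<And>f'. flip 1 f' 0 = f' 0" by (auto simp: flip_def)
  have "Qop (P0 x) (f, m) = (\<Sum>i\<in>PI. 1 / 4 * lreg lamplighter (qk i) (P0 x) (f, m))"
    unfolding Qop_def by (simp add: opsum_l2_apply[OF Px])
  also have "\<dots> = (if (f, m) \<in> carrier lamplighter then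
      (if f 0 then (x (f, m) + x (flip (-1) f, m) + x (flip 1 f, m) + x (flip (-1) (flip 1 f), m)) / 4 else 0) else 0)"
    unfolding sum_PI
    by (simp add: qk_def lreg_H[OF _ Px] fin2 xor_e' xor_e3', simp add: P0a fl field_simps)
  finally have Q: "Qop (P0 x) (f, m) = \<dots>" .
  have "Wop x (f, m) = lreg lamplighter \<one>\<^bsub>lamplighter\<^esub> x (f, m) - 2 * Qop (P0 x) (f, m)"
    unfolding Wop_def lin2_def using x by simp
  also have "\<dots> = x (f, m) - 2 * Qop (P0 x) (f, m)" by (simp add: group.lreg_one_apply[OF LL_group x])
  finally have W1: "Wop x (f, m) = x (f, m) - 2 * Qop (P0 x) (f, m)" .
  show ?thesis unfolding W1 Q Wf_def using l2_zero_off[OF x, of "(f, m)"] by (auto simp: field_simps)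
qed

lemma Wf_cong_C:
  "(f, m) \<in> carrier lamplighter \<Longrightarrow>
    Wf (\<lambda>f'. if (f', m) \<in> carrier lamplighter then Y f' else 0) f = Wf Y f"
  by (simp add: Wf_def flip_C)

lemma pf_cong_C:
  "(f, m) \<in> carrier lamplighter \<Longrightarrow>
    pf j (\<lambda>f'. if (f', m) \<in> carrier lamplighter then Y f' else 0) f = pf j Y f"
  by (simp add: pf_def flip_C)

lemma Wop_pn_comm: "Wop \<circ> pn j = pn j \<circ> Wop"
proof
  fix x show "(Wop \<circ> pn j) x = (pn j \<circ> Wop) x"
  proof (cases "x \<in> l2 lamplighter")
    case True
    have px: "pn j x \<in> l2 lamplighter" by (rule bops_l2[OF pn_bops True])
    have wx: "Wop x \<in> l2 lamplighter" by (rule bops_l2[OF Wop_bops True])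
    show ?thesis
    proof
      fix h show "(Wop \<circ> pn j) x h = (pn j \<circ> Wop) x h"
      proof (cases h)
        case (Pair f m)
        have "Wop (pn j x) (f, m) = pn j (Wop x) (f, m)"
        proof (cases "(f, m) \<in> carrier lamplighter")
          case C: True
          have "Wop (pn j x) (f, m) = Wf (\<lambda>f'. pn j x (f', m)) f" by (simp add: Wop_apply[OF px] C)
          also have "\<dots> = Wf (pf j (\<lambda>f'. x (f', m))) f"
            unfolding pn_apply[OF True] by (rule Wf_cong_C[OF C])
          also have "\<dots> = pf j (Wf (\<lambda>f'. x (f', m))) f" by (rule key)
          also have "\<dots> = pf j (\<lambda>f'. Wop x (f', m)) f"
            unfolding Wop_apply[OF True] by (rule pf_cong_C[OF C, symmetric])
          also have "\<dots> = pn j (Wop x) (f, m)" by (simp add: pn_apply[OF wx] C)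
          finally show ?thesis .
        next
          case False
          then show ?thesis by (simp add: Wop_apply[OF px] pn_apply[OF wx])
        qed
        then show ?thesis using Pair by simp
      qed
    qed
  next
    case False
    have 1: "pn j x = (\<lambda>_. 0)" by (rule bops_out[OF pn_bops False])
    have 2: "Wop x = (\<lambda>_. 0)" by (rule bops_out[OF Wop_bops False])
    show ?thesis unfolding comp_apply 1 2 bops_zero[OF pn_bops] bops_zero[OF Wop_bops] ..
  qed
qed

lemma F_flip: "(\<lambda>k. f0 (k + n) \<noteq> flip a f' (k + n)) = flip (a - n) (\<lambda>k. f0 (k + n) \<noteq> f' (k + n))"
  by (auto simp: flip_def fun_eq_iff)

lemma pn_conj:
  assumes g: "(f0, n) \<in> carrier lamplighter"
  shows "lreg lamplighter (f0, n) \<circ> pn j = pn (j + n) \<circ> lreg lamplighter (f0, n)"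
proof
  fix x show "(lreg lamplighter (f0, n) \<circ> pn j) x = (pn (j + n) \<circ> lreg lamplighter (f0, n)) x"
  proof (cases "x \<in> l2 lamplighter")
    case True
    have px: "pn j x \<in> l2 lamplighter" by (rule bops_l2[OF pn_bops True])
    have lx: "lreg lamplighter (f0, n) x \<in> l2 lamplighter" by (rule bops_l2[OF lreg_bops_LL[OF g] True])
    define F where "F f' = (\<lambda>k. f0 (k + n) \<noteq> f' (k + n))" for f'
    have mc: "\<And>f m. (f, m) \<in> carrier lamplighter \<Longrightarrow> (F f, m - n) \<in> carrier lamplighter"
    proof -
      fix f m assume "(f, m) \<in> carrier lamplighter"
      then have "inv\<^bsub>lamplighter\<^esub> (f0, n) \<otimes>\<^bsub>lamplighter\<^esub> (f, m) \<in> carrier lamplighter"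
        using g by (intro monoid.m_closed[OF group.is_monoid[OF LL_group]] group.inv_closed[OF LL_group])
      then show "(F f, m - n) \<in> carrier lamplighter" using LL_inv_mult[OF g] by (simp add: F_def)
    qed
    have la: "\<And>f m. lreg lamplighter (f0, n) x (f, m) = (if (f, m) \<in> carrier lamplighter then x (F f, m - n) else 0)"
      using LL_inv_mult[OF g] True by (simp add: lreg_def F_def)
    have lb: "\<And>f m. lreg lamplighter (f0, n) (pn j x) (f, m) = (if (f, m) \<in> carrier lamplighter then pn j x (F f, m - n) else 0)"
      using LL_inv_mult[OF g] px by (simp add: lreg_def F_def)
    show ?thesis
    proof
      fix h show "(lreg lamplighter (f0, n) \<circ> pn j) x h = (pn (j + n) \<circ> lreg lamplighter (f0, n)) x h"
      proof (cases h)
        case (Pair f m)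
        have "lreg lamplighter (f0, n) (pn j x) (f, m) = pn (j + n) (lreg lamplighter (f0, n) x) (f, m)"
        proof (cases "(f, m) \<in> carrier lamplighter")
          case C: True
          have "lreg lamplighter (f0, n) (pn j x) (f, m) = pf j (\<lambda>f'. x (f', m - n)) (F f)"
            using mc[OF C] by (simp add: lb C pn_apply[OF True])
          also have "\<dots> = pf (j + n) (\<lambda>f'. x (F f', m - n)) f"
          proof -
            have e1: "F (flip (j + n) f) = flip j (F f)" unfolding F_def by (auto simp: flip_def fun_eq_iff)
            have e2: "F (flip (j + n + 1) f) = flip (j + 1) (F f)" unfolding F_def by (auto simp: flip_def fun_eq_iff algebra_simps)
            have e3: "F (flip (j + n) (flip (j + n + 1) f)) = flip j (flip (j + 1) (F f))"
              unfolding F_def by (auto simp: flip_def fun_eq_iff algebra_simps)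
            show ?thesis by (simp only: pf_def e1 e2 e3)
          qed
          also have "\<dots> = pf (j + n) (\<lambda>f'. lreg lamplighter (f0, n) x (f', m)) f"
            unfolding la by (rule pf_cong_C[OF C, symmetric])
          also have "\<dots> = pn (j + n) (lreg lamplighter (f0, n) x) (f, m)"
            by (simp add: pn_apply[OF lx] C)
          finally show ?thesis .
        next
          case False
          then show ?thesis by (simp add: lb pn_apply[OF lx])
        qed
        then show ?thesis using Pair by simp
      qed
    qed
  next
    case False
    have 1: "pn j x = (\<lambda>_. 0)" by (rule bops_out[OF pn_bops False])
    have 2: "lreg lamplighter (f0, n) x = (\<lambda>_. 0)" by (rule bops_out[OF lreg_bops_LL[OF g] False])
    show ?thesis unfolding comp_apply 1 2 bops_zero[OF pn_bops] bops_zero[OF lreg_bops_LL[OF g]] ..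
  qed
qed


definition Sgen :: "(((int \<Rightarrow> bool) \<times> int \<Rightarrow> complex) \<Rightarrow> ((int \<Rightarrow> bool) \<times> int \<Rightarrow> complex)) set" where
  "Sgen = range pn"
definition Malg :: "(((int \<Rightarrow> bool) \<times> int \<Rightarrow> complex) \<Rightarrow> ((int \<Rightarrow> bool) \<times> int \<Rightarrow> complex)) set" where
  "Malg = commutant lamplighter (commutant lamplighter Sgen)"

lemma Sgen_bops: "Sgen \<subseteq> bops lamplighter"
  using pn_bops by (auto simp: Sgen_def)

lemma Sgen_star: "star_closed lamplighter Sgen"
  unfolding star_closed_is_adj
proof
  fix T assume "T \<in> Sgen"
  then obtain j where j: "T = pn j" by (auto simp: Sgen_def)
  show "\<exists>S\<in>Sgen. is_adj lamplighter T S"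
  proof (rule bexI[of _ "pn j"])
    show "is_adj lamplighter T (pn j)" unfolding j by (rule pn_self_adj)
    show "pn j \<in> Sgen" by (simp add: Sgen_def)
  qed
qed

lemma Malg_vN: "von_neumann_algebra lamplighter Malg"
  unfolding Malg_def by (rule vN_bicommutant[OF Sgen_bops Sgen_star])

lemma lreg_C_bops: "lreg lamplighter ` carrier lamplighter \<subseteq> bops lamplighter"
  using lreg_bops_LL by auto

lemma pn_in_LG: "pn j \<in> commutant lamplighter (commutant lamplighter (lreg lamplighter ` carrier lamplighter))"
proof -
  have "\<forall>A\<in>commutant lamplighter (lreg lamplighter ` carrier lamplighter). pn j \<circ> A = A \<circ> pn j"
  proof
    fix A assume A: "A \<in> commutant lamplighter (lreg lamplighter ` carrier lamplighter)"
    have Ab: "A \<in> bops lamplighter" using A by (simp add: commutant_def)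
    have Ac: "\<And>g. g \<in> carrier lamplighter \<Longrightarrow> A \<circ> lreg lamplighter g = lreg lamplighter g \<circ> A"
      using A by (auto simp: commutant_def)
    have "A \<circ> pn j = pn j \<circ> A"
      unfolding pn_def
      by (rule opsum_comm) (auto simp: PI_def intro: lreg_bops_LL pk_C Ab Ac)
    then show "pn j \<circ> A = A \<circ> pn j" by simp
  qed
  then show ?thesis using pn_bops by (simp add: commutant_def)
qed

lemma Malg_sub: "Malg \<subseteq> group_vN lamplighter (carrier lamplighter)"
proof -
  let ?X = "lreg lamplighter ` carrier lamplighter"
  have "Sgen \<subseteq> commutant lamplighter (commutant lamplighter ?X)"
    using pn_in_LG by (auto simp: Sgen_def)
  then have "commutant lamplighter (commutant lamplighter (commutant lamplighter ?X)) \<subseteq> commutant lamplighter Sgen"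
    by (rule commutant_anti)
  then have "commutant lamplighter ?X \<subseteq> commutant lamplighter Sgen"
    by (simp add: commutant3[OF lreg_C_bops])
  then have "commutant lamplighter (commutant lamplighter Sgen) \<subseteq> commutant lamplighter (commutant lamplighter ?X)"
    by (rule commutant_anti)
  then show ?thesis by (simp add: Malg_def group_vN_def)
qed

lemma Malg_inv: "G_invariant lamplighter Malg"
  unfolding G_invariant_def
proof (intro ballI)
  fix g T assume g: "g \<in> carrier lamplighter" and T: "T \<in> Malg"
  obtain f0 n where gp: "g = (f0, n)" by (cases g)
  have gi: "inv\<^bsub>lamplighter\<^esub> g \<in> carrier lamplighter" by (rule group.inv_closed[OF LL_group g])
  have ginv: "inv\<^bsub>lamplighter\<^esub> g = (\<lambda>k. f0 (k + n), - n)" using g gp LL_inv by simp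
  define V where "V = lreg lamplighter g"
  define V' where "V' = lreg lamplighter (inv\<^bsub>lamplighter\<^esub> g)"
  have Vb: "V \<in> bops lamplighter" unfolding V_def by (rule lreg_bops_LL[OF g])
  have V'b: "V' \<in> bops lamplighter" unfolding V'_def by (rule lreg_bops_LL[OF gi])
  have VV': "V \<circ> V' = lreg lamplighter \<one>\<^bsub>lamplighter\<^esub>"
    unfolding V_def V'_def using group.lreg_comp[OF LL_group g gi] group.r_inv[OF LL_group g] by simp
  have cV: "\<And>j. V \<circ> pn j = pn (j + n) \<circ> V"
    unfolding V_def gp by (rule pn_conj) (use g gp in simp)
  have cV': "\<And>j. V' \<circ> pn j = pn (j - n) \<circ> V'"
  proof -
    fix j
    have "(\<lambda>k. f0 (k + n), - n) \<in> carrier lamplighter" using gi ginv by simp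
    from pn_conj[OF this, of j] show "V' \<circ> pn j = pn (j - n) \<circ> V'" unfolding V'_def ginv by simp
  qed
  have Tb: "T \<in> bops lamplighter" and TA: "\<And>A. A \<in> commutant lamplighter Sgen \<Longrightarrow> T \<circ> A = A \<circ> T"
    using T by (auto simp: Malg_def commutant_def)
  have "\<forall>A\<in>commutant lamplighter Sgen. (V \<circ> T \<circ> V') \<circ> A = A \<circ> (V \<circ> T \<circ> V')"
  proof
    fix A assume A: "A \<in> commutant lamplighter Sgen"
    have Ab: "A \<in> bops lamplighter" using A by (simp add: commutant_def)
    have Ap: "\<And>j. A \<circ> pn j = pn j \<circ> A" using A by (auto simp: commutant_def Sgen_def)
    define B where "B = V' \<circ> A \<circ> V"
    have Bb: "B \<in> bops lamplighter" unfolding B_def by (intro bops_comp Ab Vb V'b)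
    have "\<forall>S\<in>Sgen. B \<circ> S = S \<circ> B"
    proof
      fix S assume "S \<in> Sgen"
      then obtain j where j: "S = pn j" by (auto simp: Sgen_def)
      have "B \<circ> pn j = V' \<circ> A \<circ> (V \<circ> pn j)" by (simp add: B_def o_assoc)
      also have "\<dots> = V' \<circ> (A \<circ> pn (j + n)) \<circ> V" by (simp add: cV o_assoc)
      also have "\<dots> = (V' \<circ> pn (j + n)) \<circ> A \<circ> V" by (simp add: Ap o_assoc)
      also have "\<dots> = pn j \<circ> B" by (simp add: cV' B_def o_assoc)
      finally show "B \<circ> S = S \<circ> B" unfolding j .
    qed
    then have "B \<in> commutant lamplighter Sgen" using Bb by (simp add: commutant_def)
    then have TB: "T \<circ> B = B \<circ> T" by (rule TA)
    have "V \<circ> T \<circ> V' \<circ> A = V \<circ> T \<circ> (V' \<circ> (A \<circ> lreg lamplighter \<one>\<^bsub>lamplighter\<^esub>))"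
      by (simp add: group.lreg_one_right[OF LL_group Ab] o_assoc)
    also have "\<dots> = V \<circ> (T \<circ> B) \<circ> V'" by (simp add: B_def VV'[symmetric] o_assoc)
    also have "\<dots> = V \<circ> (B \<circ> T) \<circ> V'" by (simp add: TB)
    also have "\<dots> = (V \<circ> V') \<circ> A \<circ> (V \<circ> T \<circ> V')" by (simp add: B_def o_assoc)
    also have "\<dots> = A \<circ> (V \<circ> T \<circ> V')" by (simp add: VV' group.lreg_one_left[OF LL_group Ab])
    finally show "(V \<circ> T \<circ> V') \<circ> A = A \<circ> (V \<circ> T \<circ> V')" .
  qed
  moreover have "V \<circ> T \<circ> V' \<in> bops lamplighter" by (intro bops_comp Vb Tb V'b)
  ultimately have "V \<circ> T \<circ> V' \<in> Malg" by (simp add: Malg_def commutant_def)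
  then show "lreg lamplighter g \<circ> T \<circ> lreg lamplighter (inv\<^bsub>lamplighter\<^esub> g) \<in> Malg"
    by (simp add: V_def V'_def)
qed


lemma nz_fun: "F k \<Longrightarrow> F \<noteq> (\<lambda>_. False)"
  by auto

lemma one_LL_C: "(\<lambda>_. False, 0::int) \<in> carrier lamplighter"
  by (simp add: LL_carrier)

lemma e0_C: "(\<lambda>k::int. k = 0, 0::int) \<in> carrier lamplighter"
  by (simp add: LL_carrier)

lemma dlt1_apply: "dlt (\<lambda>_. False, 0::int) (F, m) = (if F = (\<lambda>_. False) \<and> m = 0 then 1 else 0)"
  by (auto simp: dlt_def)

lemma val_pn: "pn 0 (dlt (\<lambda>_. False, 0)) (\<lambda>k. k = 0, 0) = - 1 / 4"
proof -
  have dl: "dlt (\<lambda>_. False, 0::int) \<in> l2 lamplighter" by (rule dlt_l2[OF one_LL_C])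
  have f1: "flip 0 (\<lambda>k::int. k = 0) = (\<lambda>_. False)" by (auto simp: flip_def fun_eq_iff)
  have f2: "(\<lambda>k::int. k = 0) \<noteq> (\<lambda>_. False)" by (rule nz_fun[of _ 0]) simp
  have f3: "flip 1 (\<lambda>k::int. k = 0) \<noteq> (\<lambda>_. False)" by (rule nz_fun[of _ 0]) (simp add: flip_def)
  have f4: "flip 0 (flip 1 (\<lambda>k::int. k = 0)) \<noteq> (\<lambda>_. False)" by (rule nz_fun[of _ 1]) (simp add: flip_def)
  show ?thesis using e0_C
    by (simp add: pn_apply[OF dl] pf_def dlt1_apply f1 f2 f3 f4)
qed

lemma val_W1: "lreg lamplighter (\<lambda>k. k = 0, 0) (Wop (dlt (\<lambda>_. False, 0))) (\<lambda>k. k = 0, 0) = 1"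
proof -
  have dl: "dlt (\<lambda>_. False, 0::int) \<in> l2 lamplighter" by (rule dlt_l2[OF one_LL_C])
  have wl: "Wop (dlt (\<lambda>_. False, 0::int)) \<in> l2 lamplighter" by (rule bops_l2[OF Wop_bops dl])
  have fin: "finite {k::int. k = 0}" by simp
  have "lreg lamplighter (\<lambda>k. k = 0, 0) (Wop (dlt (\<lambda>_. False, 0))) (\<lambda>k. k = 0, 0)
      = Wop (dlt (\<lambda>_. False, 0)) (\<lambda>_. False, 0)"
    using e0_C by (simp add: lreg_H[OF fin wl])
  also have "\<dots> = 1" using one_LL_C by (simp add: Wop_apply[OF dl] Wf_def dlt1_apply)
  finally show ?thesis .
qed

lemma val_W2: "Wop (lreg lamplighter (\<lambda>k. k = 0, 0) (dlt (\<lambda>_. False, 0))) (\<lambda>k. k = 0, 0) = 1 / 2"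
proof -
  have dl: "dlt (\<lambda>_. False, 0::int) \<in> l2 lamplighter" by (rule dlt_l2[OF one_LL_C])
  have fin: "finite {k::int. k = 0}" by simp
  have ll: "lreg lamplighter (\<lambda>k. k = 0, 0) (dlt (\<lambda>_. False, 0)) \<in> l2 lamplighter"
    by (rule bops_l2[OF lreg_bops_LL[OF e0_C] dl])
  define e0 where "e0 = (\<lambda>k::int. k = 0)"
  have Y: "\<And>f'. lreg lamplighter (e0, 0) (dlt (\<lambda>_. False, 0)) (f', 0)
      = (if (f', 0) \<in> carrier lamplighter then (if (\<lambda>k. e0 k \<noteq> f' k) = (\<lambda>_. False) then 1 else 0) else 0)"
    unfolding e0_def by (simp add: lreg_H[OF fin dl] dlt1_apply)
  have C1: "(flip (-1) e0, 0) \<in> carrier lamplighter" "(flip 1 e0, 0) \<in> carrier lamplighter"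
    "(flip (-1) (flip 1 e0), 0) \<in> carrier lamplighter" "(e0, 0) \<in> carrier lamplighter"
    using e0_C unfolding e0_def by (simp_all add: flip_C)
  have g0: "(\<lambda>k. e0 k \<noteq> e0 k) = (\<lambda>_. False)" by simp
  have g1: "(\<lambda>k. e0 k \<noteq> flip (-1) e0 k) \<noteq> (\<lambda>_. False)"
    by (rule nz_fun[of _ "-1"]) (simp add: flip_def e0_def)
  have g2: "(\<lambda>k. e0 k \<noteq> flip 1 e0 k) \<noteq> (\<lambda>_. False)"
    by (rule nz_fun[of _ 1]) (simp add: flip_def e0_def)
  have g3: "(\<lambda>k. e0 k \<noteq> flip (-1) (flip 1 e0) k) \<noteq> (\<lambda>_. False)"
    by (rule nz_fun[of _ 1]) (simp add: flip_def e0_def)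
  have "Wop (lreg lamplighter (e0, 0) (dlt (\<lambda>_. False, 0))) (e0, 0)
      = Wf (\<lambda>f'. lreg lamplighter (e0, 0) (dlt (\<lambda>_. False, 0)) (f', 0)) e0"
    using C1(4) by (simp add: Wop_apply[OF ll[folded e0_def]])
  also have "\<dots> = 1 / 2"
    unfolding Wf_def Y using C1 g1 g2 g3 by (simp only: if_True if_False g0) (simp add: e0_def)
  finally show ?thesis unfolding e0_def .
qed

theorem proposition5p6:
  shows "\<not> has_ISR lamplighter"
proof
  assume H: "has_ISR lamplighter"
  have "\<exists>N. N \<lhd> lamplighter \<and> Malg = group_vN lamplighter N"
    using H Malg_vN Malg_sub Malg_inv unfolding has_ISR_def by simp
  then obtain N where N: "N \<lhd> lamplighter" and MN: "Malg = group_vN lamplighter N" by blast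
  have sg: "subgroup N lamplighter" by (rule normal_imp_subgroup[OF N])
  let ?X = "lreg lamplighter ` N"
  have Xb: "?X \<subseteq> bops lamplighter"
    using subgroup.subset[OF sg] lreg_bops_LL by auto
  have MX: "Malg = commutant lamplighter (commutant lamplighter ?X)"
    using MN by (simp add: group_vN_def)
  have p0: "pn 0 \<in> Malg"
    unfolding Malg_def using commutant_incl[OF Sgen_bops] by (auto simp: Sgen_def)
  have PN: "Pset lamplighter N \<in> commutant lamplighter ?X"
  proof -
    have "\<forall>B\<in>?X. Pset lamplighter N \<circ> B = B \<circ> Pset lamplighter N"
    proof
      fix B assume "B \<in> ?X"
      then obtain n where n: "n \<in> N" "B = lreg lamplighter n" by blast
      show "Pset lamplighter N \<circ> B = B \<circ> Pset lamplighter N"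
        unfolding n(2) using group.Pset_comm_lreg[OF LL_group sg n(1)] by simp
    qed
    then show ?thesis using Pset_bops by (simp add: commutant_def)
  qed
  have "pn 0 \<in> commutant lamplighter (commutant lamplighter ?X)" using p0 MX by simp
  then have "\<forall>A\<in>commutant lamplighter ?X. pn 0 \<circ> A = A \<circ> pn 0" by (simp add: commutant_def)
  then have comm1: "pn 0 \<circ> Pset lamplighter N = Pset lamplighter N \<circ> pn 0" using PN by (rule bspec)
  define d1 where "d1 = dlt (\<lambda>_::int. False, 0::int)"
  have dl: "d1 \<in> l2 lamplighter" unfolding d1_def by (rule dlt_l2[OF one_LL_C])
  have oneN: "(\<lambda>_. False, 0::int) \<in> N"
    using subgroup.one_closed[OF sg] by (simp add: LL_one)
  have Pd: "Pset lamplighter N d1 = d1"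
  proof
    fix h show "Pset lamplighter N d1 h = d1 h"
      using dl oneN by (cases "h = (\<lambda>_. False, 0)") (auto simp: Pset_def d1_def dlt_def)
  qed
  have pl: "pn 0 d1 \<in> l2 lamplighter" by (rule bops_l2[OF pn_bops dl])
  have "pn 0 d1 = Pset lamplighter N (pn 0 d1)"
    using fun_cong[OF comm1, of d1] Pd by simp
  moreover have "Pset lamplighter N (pn 0 d1) (\<lambda>k. k = 0, 0) = (if (\<lambda>k::int. k = 0, 0::int) \<in> N then pn 0 d1 (\<lambda>k. k = 0, 0) else 0)"
    using pl by (simp add: Pset_def)
  ultimately have "pn 0 d1 (\<lambda>k. k = 0, 0) = (if (\<lambda>k::int. k = 0, 0::int) \<in> N then pn 0 d1 (\<lambda>k. k = 0, 0) else 0)"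
    by simp
  then have aN: "(\<lambda>k::int. k = 0, 0::int) \<in> N"
    using val_pn unfolding d1_def by (auto split: if_splits)
  have "lreg lamplighter (\<lambda>k. k = 0, 0) \<in> ?X" using aN by (rule imageI)
  then have la: "lreg lamplighter (\<lambda>k. k = 0, 0) \<in> Malg"
    unfolding MX by (rule subsetD[OF commutant_incl[OF Xb]])
  have W: "Wop \<in> commutant lamplighter Sgen"
    using Wop_bops Wop_pn_comm by (auto simp: commutant_def Sgen_def)
  have "\<forall>A\<in>commutant lamplighter Sgen. lreg lamplighter (\<lambda>k. k = 0, 0) \<circ> A = A \<circ> lreg lamplighter (\<lambda>k. k = 0, 0)"
    using la by (simp add: Malg_def commutant_def)
  then have comm2: "lreg lamplighter (\<lambda>k. k = 0, 0) \<circ> Wop = Wop \<circ> lreg lamplighter (\<lambda>k. k = 0, 0)"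
    using W by (rule bspec)
  have "lreg lamplighter (\<lambda>k. k = 0, 0) (Wop d1) (\<lambda>k. k = 0, 0) = Wop (lreg lamplighter (\<lambda>k. k = 0, 0) d1) (\<lambda>k. k = 0, 0)"
    using fun_cong[OF comm2, of d1] by simp
  then show False using val_W1 val_W2 unfolding d1_def by simp
qed


end
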